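(* Let $\mathbb{S}=[0,1]$ with $0$ and $1$ identified, and let $H:\mathbb{S}\times\mathbb{R}\times\mathbb{R}\to\mathbb{R}$ be $C^\infty$ with $\frac{\partial^2H}{\partial p^2}>0$, $p\mapsto H(x,p,u)$ superlinear for each $(x,u)$, and $|\frac{\partial H}{\partial u}|\le\kappa$ for some $\kappa>0$. Let $u_0$ be a viscosity solution of $H(x,u'(x),u(x))=0$ on $\mathbb{S}$ such that $\frac{\partial H}{\partial p}(x,u_0'(x),u_0(x))\ne0$ at every differentiability point $x$ of $u_0$. Set $B(x)=\frac{\partial H}{\partial p}(x,u_0'(x),u_0(x))$, $$\mu=\frac{\int_0^1\frac{\partial H}{\partial u}(\tau,u_0'(\tau),u_0(\tau))B(\tau)^{-1}d\tau}{\int_0^1B(\tau)^{-1}d\tau},\qquad \rho(x)=\exp\left\{\int_0^x\frac{\mu-\frac{\partial H}{\partial u}(\tau,u_0'(\tau),u_0(\tau))}{B(\tau)}\,d\tau\right\}.$$ Assume $\mu<0$. For given $\Theta\in(\mu,0)$ set $w_\epsilon(x,t)=u_0(x)-\epsilon\rho(x)e^{-\Theta t}$. Then there exists $\tilde\epsilon_0=\tilde\epsilon_0(\Theta)>0$ such that: (1) for $\epsilon\in(0,\tilde\epsilon_0]$, $\partial_tw_\epsilon(x,t)+H(x,\partial_xw_\epsilon(x,t),w_\epsilon(x,t))\ge0$ for all $(x,t)\in\mathbb{S}\times\left[0,\frac{\ln\tilde\epsilon_0-\ln|\epsilon|}{-\Theta}\right]$; (2) for $\epsilon\in[-\tilde\epsilon_0,0)$,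 $\partial_tw_\epsilon(x,t)+H(x,\partial_xw_\epsilon(x,t),w_\epsilon(x,t))\le0$ for all $(x,t)\in\mathbb{S}\times\left[0,\frac{\ln\tilde\epsilon_0-\ln|\epsilon|}{-\Theta}\right]$.
   Context: It is known that under these assumptions $u_0$ is of class $C^\infty$, so $B$ is smooth and nowhere zero, $\rho$ is a smooth positive function on $\mathbb{S}$, and $w_\epsilon$ is $C^\infty$. *)

theory Defs
  imports "HOL-Analysis.Analysis"
begin

fun Ck :: "nat \<Rightarrow> ('a::real_normed_vector \<Rightarrow> real) \<Rightarrow> bool" where
  "Ck 0 f = continuous_on UNIV f"
| "Ck (Suc k) f = (\<exists>f'. (\<forall>z. (f has_derivative f' z) (at z)) \<and> (\<forall>v. Ck k (\<lambda>z. f' z v)))"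

definition smooth_fun :: "('a::real_normed_vector \<Rightarrow> real) \<Rightarrow> bool" where
  "smooth_fun f \<longleftrightarrow> (\<forall>k. Ck k f)"

definition Hp :: "(real \<Rightarrow> real \<Rightarrow> real \<Rightarrow> real) \<Rightarrow> real \<Rightarrow> real \<Rightarrow> real \<Rightarrow> real" where
  "Hp H x p u = deriv (\<lambda>q. H x q u) p"

definition Hpp :: "(real \<Rightarrow> real \<Rightarrow> real \<Rightarrow> real) \<Rightarrow> real \<Rightarrow> real \<Rightarrow> real \<Rightarrow> real" where
  "Hpp H x p u = deriv (\<lambda>q. Hp H x q u) p"

definition Hu :: "(real \<Rightarrow> real \<Rightarrow> real \<Rightarrow> real) \<Rightarrow> real \<Rightarrow> real \<Rightarrow> real \<Rightarrow> real" where
  "Hu H x p u = deriv (\<lambda>v. H x p v) u"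

text \<open>Functions on S = [0,1] with 0 ~ 1 are 1-periodic functions on the real line.\<close>
definition periodic1 :: "(real \<Rightarrow> 'b) \<Rightarrow> bool" where
  "periodic1 f \<longleftrightarrow> (\<forall>x. f (x + 1) = f x)"

definition local_max_at :: "(real \<Rightarrow> real) \<Rightarrow> real \<Rightarrow> bool" where
  "local_max_at g x \<longleftrightarrow> (\<exists>e>0. \<forall>y. \<bar>y - x\<bar> < e \<longrightarrow> g y \<le> g x)"

definition local_min_at :: "(real \<Rightarrow> real) \<Rightarrow> real \<Rightarrow> bool" where
  "local_min_at g x \<longleftrightarrow> (\<exists>e>0. \<forall>y. \<bar>y - x\<bar> < e \<longrightarrow> g x \<le> g y)"

definition viscosity_solution :: "(real \<Rightarrow> real \<Rightarrow> real \<Rightarrow> real) \<Rightarrow> (real \<Rightarrow> real) \<Rightarrow> bool" where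
  "viscosity_solution H u \<longleftrightarrow>
     continuous_on UNIV u \<and> periodic1 u \<and>
     (\<forall>\<phi> x. \<phi> C1_differentiable_on UNIV \<longrightarrow>
        (local_max_at (\<lambda>y. u y - \<phi> y) x \<longrightarrow> H x (deriv \<phi> x) (u x) \<le> 0) \<and>
        (local_min_at (\<lambda>y. u y - \<phi> y) x \<longrightarrow> H x (deriv \<phi> x) (u x) \<ge> 0))"

definition Bfun :: "(real \<Rightarrow> real \<Rightarrow> real \<Rightarrow> real) \<Rightarrow> (real \<Rightarrow> real) \<Rightarrow> real \<Rightarrow> real" where
  "Bfun H u0 x = Hp H x (deriv u0 x) (u0 x)"

definition mu_const :: "(real \<Rightarrow> real \<Rightarrow> real \<Rightarrow> real) \<Rightarrow> (real \<Rightarrow> real) \<Rightarrow> real" where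
  "mu_const H u0 =
     (LBINT \<tau>=0..1. Hu H \<tau> (deriv u0 \<tau>) (u0 \<tau>) / Bfun H u0 \<tau>) /
     (LBINT \<tau>=0..1. 1 / Bfun H u0 \<tau>)"

text \<open>rho(x) = exp(int_0^x ...), with the oriented interval integral (so it is
  defined on all of the real line, i.e. as a function on S via periodicity).\<close>
definition rho :: "(real \<Rightarrow> real \<Rightarrow> real \<Rightarrow> real) \<Rightarrow> (real \<Rightarrow> real) \<Rightarrow> real \<Rightarrow> real" where
  "rho H u0 x = exp (LBINT \<tau>=0..x.
      (mu_const H u0 - Hu H \<tau> (deriv u0 \<tau>) (u0 \<tau>)) / Bfun H u0 \<tau>)"

definition w_eps :: "(real \<Rightarrow> real \<Rightarrow> real \<Rightarrow> real) \<Rightarrow> (real \<Rightarrow> real) \<Rightarrow> real \<Rightarrow> real \<Rightarrow> real \<Rightarrow> real \<Rightarrow> real" where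
  "w_eps H u0 \<Theta> \<epsilon> x t = u0 x - \<epsilon> * rho H u0 x * exp (- \<Theta> * t)"

end

theory Submission
  imports Defs
begin

definition sconv :: "(real \<Rightarrow> real) \<Rightarrow> bool" where
  "sconv f \<longleftrightarrow> (\<forall>p q t. p \<noteq> q \<longrightarrow> 0 < t \<longrightarrow> t < 1 \<longrightarrow> f ((1-t)*p + t*q) < (1-t) * f p + t * f q)"

lemma sconv_3:
  assumes "sconv f" "p1 < p2" "p2 < p3"
  shows "(p3 - p1) * f p2 < (p3 - p2) * f p1 + (p2 - p1) * f p3"
proof -
  define t where "t = (p2 - p1) / (p3 - p1)"
  have t: "0 < t" "t < 1" using assms by (auto simp: t_def field_simps)
  have ne: "p3 - p1 \<noteq> 0" using assms by simp
  have "(1-t)*p1 + t*p3 = p1 + t*(p3 - p1)" by (simp add: algebra_simps)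
  also have "\<dots> = p2" using ne by (simp add: t_def)
  finally have e: "(1-t)*p1 + t*p3 = p2" .
  have "f p2 < (1-t) * f p1 + t * f p3" using assms(1) t e unfolding sconv_def
    by (metis assms(2) assms(3) order_less_irrefl order_less_trans)
  then have "(p3 - p1) * f p2 < (p3 - p1) * ((1-t) * f p1 + t * f p3)"
    using assms by simp
  also have "\<dots> = (p3 - p1 - (p3 - p1) * t) * f p1 + ((p3 - p1) * t) * f p3"
    by (simp add: algebra_simps)
  also have "\<dots> = (p3 - p2) * f p1 + (p2 - p1) * f p3"
  proof -
    have "(p3 - p1) * t = p2 - p1" using ne by (simp add: t_def)
    then show ?thesis by simp
  qed
  finally show ?thesis .
qed

lemma sconv_mono_right:
  assumes "sconv f" "p1 < p2" "p2 < p3" "f p1 \<le> f p2"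
  shows "f p2 < f p3"
proof -
  have "(p3 - p1) * f p2 < (p3 - p2) * f p1 + (p2 - p1) * f p3" using sconv_3 assms by blast
  moreover have "(p3 - p2) * f p1 \<le> (p3 - p2) * f p2" using assms by simp
  ultimately have "(p2 - p1) * f p2 < (p2 - p1) * f p3" by (simp add: algebra_simps)
  then show ?thesis using assms by (simp add: mult_less_cancel_left)
qed

lemma sconv_mono_left:
  assumes "sconv f" "p3 < p2" "p2 < p1" "f p1 \<le> f p2"
  shows "f p2 < f p3"
proof -
  have "(p1 - p3) * f p2 < (p1 - p2) * f p3 + (p2 - p3) * f p1" using sconv_3[OF assms(1,2,3)] by simp
  moreover have "(p2 - p3) * f p1 \<le> (p2 - p3) * f p2" using assms by simp
  ultimately have "(p1 - p2) * f p2 < (p1 - p2) * f p3" by (simp add: algebra_simps)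
  then show ?thesis using assms by (simp add: mult_less_cancel_left)
qed

lemma sconv_le_max:
  assumes "sconv f" "p1 \<le> p" "p \<le> p3"
  shows "f p \<le> max (f p1) (f p3)"
proof (cases "p1 < p \<and> p < p3")
  case True
  have "(p3 - p1) * f p < (p3 - p) * f p1 + (p - p1) * f p3" using sconv_3 assms True by blast
  also have "\<dots> \<le> (p3 - p) * max (f p1) (f p3) + (p - p1) * max (f p1) (f p3)"
    using True by (intro add_mono mult_left_mono) auto
  also have "\<dots> = (p3 - p1) * max (f p1) (f p3)" by (simp add: algebra_simps)
  finally show ?thesis using True by (simp add: mult_less_cancel_left)
next
  case False
  then have "p = p1 \<or> p = p3" using assms by auto
  then show ?thesis by auto
qed

lemma sconv_lt_max:
  assumes "sconv f" "p1 < p" "p < p3"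
  shows "f p < max (f p1) (f p3)"
proof -
  have "(p3 - p1) * f p < (p3 - p) * f p1 + (p - p1) * f p3" using sconv_3 assms by blast
  also have "\<dots> \<le> (p3 - p) * max (f p1) (f p3) + (p - p1) * max (f p1) (f p3)"
    using assms by (intro add_mono mult_left_mono) auto
  also have "\<dots> = (p3 - p1) * max (f p1) (f p3)" by (simp add: algebra_simps)
  finally show ?thesis using assms by (simp add: mult_less_cancel_left)
qed

lemma quad_C1: "(\<lambda>y::real. q*(y - x) + K*(y-x)^2) C1_differentiable_on UNIV"
  by (intro C1_differentiable_on_add C1_differentiable_on_mult C1_differentiable_on_diff
      C1_differentiable_on_const C1_differentiable_on_ident) (simp add: power2_eq_square)

lemma quad_deriv: "deriv (\<lambda>y::real. q*(y - x) + K*(y-x)^2) w = q + 2*K*(w - x)"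
proof -
  have "((\<lambda>y::real. q*(y - x) + K*(y-x)^2) has_real_derivative (q + 2*K*(w - x))) (at w)"
    by (auto intro!: derivative_eq_intros simp: algebra_simps)
  then show ?thesis by (rule DERIV_imp_deriv)
qed

lemma cont_gt:
  fixes f :: "real \<Rightarrow> real"
  assumes "isCont f z" "f z > (c::real)"
  shows "\<exists>r>0. \<forall>w. \<bar>w - z\<bar> < r \<longrightarrow> f w > c"
proof -
  obtain d where d: "d > 0" "\<forall>y. dist y z < d \<longrightarrow> dist (f y) (f z) < f z - c"
    using assms unfolding continuous_at_eps_delta by (metis diff_gt_0_iff_gt)
  show ?thesis
    by (rule exI[of _ d]) (use d in \<open>auto simp: dist_real_def abs_less_iff\<close>)
qed

lemma cont_lt:
  fixes f :: "real \<Rightarrow> real"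
  assumes "isCont f z" "f z < (c::real)"
  shows "\<exists>r>0. \<forall>w. \<bar>w - z\<bar> < r \<longrightarrow> f w < c"
proof -
  have "isCont (\<lambda>w. - f w) z" using assms by (intro continuous_intros)
  from cont_gt[OF this, of "-c"] assms show ?thesis by auto
qed

lemma interior_max_local:
  assumes "c < w" "w < d" "\<forall>y. c \<le> y \<and> y \<le> d \<longrightarrow> f y \<le> f w"
  shows "local_max_at f w"
  unfolding local_max_at_def
  by (rule exI[of _ "min (w - c) (d - w)"]) (use assms in \<open>auto simp: abs_less_iff\<close>)

lemma interior_min_local:
  assumes "c < w" "w < d" "\<forall>y. c \<le> y \<and> y \<le> d \<longrightarrow> f w \<le> f y"
  shows "local_min_at f w"
  unfolding local_min_at_def
  by (rule exI[of _ "min (w - c) (d - w)"]) (use assms in \<open>auto simp: abs_less_iff\<close>)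

lemma attains_max:
  assumes "c \<le> d" "continuous_on {c..d} (f::real\<Rightarrow>real)"
  shows "\<exists>w. c \<le> w \<and> w \<le> d \<and> (\<forall>y. c \<le> y \<and> y \<le> d \<longrightarrow> f y \<le> f w)"
  using continuous_attains_sup[OF compact_Icc _ assms(2)] assms(1) by auto

lemma attains_min:
  assumes "c \<le> d" "continuous_on {c..d} (f::real\<Rightarrow>real)"
  shows "\<exists>w. c \<le> w \<and> w \<le> d \<and> (\<forall>y. c \<le> y \<and> y \<le> d \<longrightarrow> f w \<le> f y)"
  using continuous_attains_inf[OF compact_Icc _ assms(2)] assms(1) by auto

locale visc =
  fixes G :: "real \<Rightarrow> real \<Rightarrow> real \<Rightarrow> real" and u :: "real \<Rightarrow> real"
  assumes contG: "continuous_on UNIV (\<lambda>(x,p,v). G x p v)"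
  and cvx: "\<And>x v. sconv (\<lambda>p. G x p v)"
  and coer: "\<And>x v. \<exists>C. \<forall>p. \<bar>p\<bar> - C \<le> G x p v"
  and contu: "continuous_on UNIV u"
  and sub: "\<And>\<phi> x. \<phi> C1_differentiable_on UNIV \<Longrightarrow> local_max_at (\<lambda>y. u y - \<phi> y) x \<Longrightarrow> G x (deriv \<phi> x) (u x) \<le> 0"
  and super: "\<And>\<phi> x. \<phi> C1_differentiable_on UNIV \<Longrightarrow> local_min_at (\<lambda>y. u y - \<phi> y) x \<Longrightarrow> G x (deriv \<phi> x) (u x) \<ge> 0"
begin

lemma contF: "continuous_on UNIV (\<lambda>z. G (fst z) (snd z) (u (fst z)))"
proof -
  have "continuous_on UNIV (\<lambda>z::real\<times>real. (fst z, snd z, u (fst z)))"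
    by (intro continuous_intros continuous_on_compose2[OF contu]) auto
  from continuous_on_compose2[OF contG this] show ?thesis by simp
qed

lemma contGw: "continuous_on UNIV (\<lambda>w. G w p (u w))"
proof -
  have "continuous_on UNIV (\<lambda>w::real. (w, p))" by (intro continuous_intros)
  from continuous_on_compose2[OF contF this] show ?thesis by simp
qed

lemma isContGw: "isCont (\<lambda>w. G w p (u w)) z"
  using contGw continuous_on_eq_continuous_at by blast

lemma isContGw2: "isCont (\<lambda>w. G w q (u w) - G w p (u w)) z"
  using isContGw by (intro continuous_intros)

lemma contGp: "continuous_on UNIV (\<lambda>p. G z p (u z))"
proof -
  have "continuous_on UNIV (\<lambda>p::real. (z, p))" by (intro continuous_intros)
  from continuous_on_compose2[OF contF this] show ?thesis by simp
qed

lemma ubound: "\<exists>M\<ge>0. \<forall>w. \<bar>w - z\<bar> \<le> R \<longrightarrow> \<bar>u w\<bar> \<le> M"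
proof (cases "R \<ge> 0")
  case True
  have "continuous_on {z-R..z+R} (\<lambda>w. \<bar>u w\<bar>)"
    by (intro continuous_intros continuous_on_subset[OF contu]) auto
  from attains_max[OF _ this] True obtain w0 where
    w0: "\<forall>y. z - R \<le> y \<and> y \<le> z + R \<longrightarrow> \<bar>u y\<bar> \<le> \<bar>u w0\<bar>" by auto
  show ?thesis by (rule exI[of _ "\<bar>u w0\<bar>"]) (use w0 in \<open>auto simp: abs_le_iff\<close>)
next
  case False then show ?thesis by auto
qed

definition Zs where "Zs z = {p. G z p (u z) \<le> 0}"
definition a where "a z = Inf (Zs z)"
definition b where "b z = Sup (Zs z)"

lemma allpos_contra:
  assumes r: "r > 0" and pos: "\<forall>w. \<bar>w - z\<bar> < r \<longrightarrow> (\<forall>p. G w p (u w) > 0)"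
  shows False
proof -
  define \<rho> where "\<rho> = min r 1 / 2"
  have \<rho>: "\<rho> > 0" "\<rho> < r" "\<rho> \<le> 1" using r by (auto simp: \<rho>_def)
  obtain M where M: "M \<ge> 0" "\<forall>w. \<bar>w - z\<bar> \<le> 1 \<longrightarrow> \<bar>u w\<bar> \<le> M" using ubound by blast
  define K where "K = (2*M+1)/\<rho>^2"
  have K\<rho>: "K * \<rho>^2 = 2*M+1" using \<rho> by (simp add: K_def)
  define \<Phi> where "\<Phi> y = u y - (0*(y - z) + K*(y-z)^2)" for y
  have "continuous_on {z-\<rho>..z+\<rho>} \<Phi>" unfolding \<Phi>_def
    by (intro continuous_intros continuous_on_subset[OF contu]) auto
  from attains_max[OF _ this] \<rho> obtain w where
    w: "z - \<rho> \<le> w" "w \<le> z + \<rho>" "\<forall>y. z - \<rho> \<le> y \<and> y \<le> z + \<rho> \<longrightarrow> \<Phi> y \<le> \<Phi> w" by auto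
  have "\<Phi> z \<le> \<Phi> w" using w \<rho> by auto
  have uz: "\<bar>u z\<bar> \<le> M" using M by auto
  have "\<Phi> (z - \<rho>) < \<Phi> z"
  proof -
    have "\<bar>u (z - \<rho>)\<bar> \<le> M" using M \<rho> by auto
    moreover have "\<Phi> (z - \<rho>) = u (z - \<rho>) - K * \<rho>^2" by (simp add: \<Phi>_def power2_eq_square)
    ultimately show ?thesis using uz K\<rho> by (simp add: \<Phi>_def)
  qed
  moreover have "\<Phi> (z + \<rho>) < \<Phi> z"
  proof -
    have "\<bar>u (z + \<rho>)\<bar> \<le> M" using M \<rho> by auto
    moreover have "\<Phi> (z + \<rho>) = u (z + \<rho>) - K * \<rho>^2" by (simp add: \<Phi>_def power2_eq_square)
    ultimately show ?thesis using uz K\<rho> by (simp add: \<Phi>_def)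
  qed
  ultimately have w2: "z - \<rho> < w" "w < z + \<rho>" using w \<open>\<Phi> z \<le> \<Phi> w\<close>
    by (metis order.not_eq_order_implies_strict not_le)+
  have "local_max_at (\<lambda>y. u y - (0*(y - z) + K*(y-z)^2)) w"
    using interior_max_local[OF w2 w(3)] unfolding \<Phi>_def .
  from sub[OF quad_C1 this] have "G w (deriv (\<lambda>y. 0*(y - z) + K*(y-z)^2) w) (u w) \<le> 0" .
  moreover have "\<bar>w - z\<bar> < r" using w2 \<rho> by auto
  ultimately show False using pos[rule_format, of w "deriv (\<lambda>y. 0*(y - z) + K*(y-z)^2) w"] by linarith
qed

lemma Zne: "Zs z \<noteq> {}"
proof
  assume E: "Zs z = {}"
  hence pos: "\<forall>p. G z p (u z) > 0" by (auto simp: Zs_def not_le)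
  obtain C where C: "\<forall>p. \<bar>p\<bar> - C \<le> G z p (u z)" using coer by blast
  define g0 where "g0 = G z 0 (u z)"
  define P0 where "P0 = C + max g0 0 + 1"
  have "g0 \<ge> - C" using C[rule_format, of 0] by (simp add: g0_def)
  hence P0pos: "P0 \<ge> 1" by (simp add: P0_def)
  have "G z P0 (u z) \<ge> P0 - C" using C[rule_format, of P0] P0pos by simp
  hence g1: "G z P0 (u z) - G z 0 (u z) > 0" by (simp add: P0_def g0_def)
  have "G z (-P0) (u z) \<ge> P0 - C" using C[rule_format, of "-P0"] P0pos by simp
  hence g2: "G z (-P0) (u z) - G z 0 (u z) > 0" by (simp add: P0_def g0_def)
  obtain r1 where r1: "r1 > 0" "\<forall>w. \<bar>w - z\<bar> < r1 \<longrightarrow> G w P0 (u w) - G w 0 (u w) > 0"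
    using cont_gt[OF isContGw2 g1] by auto
  obtain r2 where r2: "r2 > 0" "\<forall>w. \<bar>w - z\<bar> < r2 \<longrightarrow> G w (-P0) (u w) - G w 0 (u w) > 0"
    using cont_gt[OF isContGw2 g2] by auto
  obtain r3 where r3: "r3 > 0" "\<forall>w. \<bar>w - z\<bar> < r3 \<longrightarrow> G w P0 (u w) > 0"
    using cont_gt[OF isContGw[of z P0], of 0] pos by auto
  obtain r4 where r4: "r4 > 0" "\<forall>w. \<bar>w - z\<bar> < r4 \<longrightarrow> G w (-P0) (u w) > 0"
    using cont_gt[OF isContGw[of z "-P0"], of 0] pos by auto
  have big: "G w p (u w) > 0" if wz: "\<bar>w - z\<bar> < min (min r1 r2) (min r3 r4)" and pP: "\<bar>p\<bar> \<ge> P0" for w p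
  proof -
    have f1: "G w P0 (u w) > G w 0 (u w)" "G w (-P0) (u w) > G w 0 (u w)"
      "G w P0 (u w) > 0" "G w (-P0) (u w) > 0" using that r1 r2 r3 r4 by auto
    consider "p = P0" | "p > P0" | "p = -P0" | "p < -P0" using pP by linarith
    then show ?thesis
    proof cases
      case 2
      have "G w P0 (u w) < G w p (u w)"
        using sconv_mono_right[OF cvx[of w "u w"], of 0 P0 p] 2 P0pos f1 by auto
      then show ?thesis using f1 by auto
    next
      case 4
      have "G w (-P0) (u w) < G w p (u w)"
        using sconv_mono_left[OF cvx[of w "u w"], of p "-P0" 0] 4 P0pos f1 by auto
      then show ?thesis using f1 by auto
    qed (use f1 in auto)
  qed
  define S where "S = cball z 1 \<times> cball (0::real) P0"
  have cS: "compact S" unfolding S_def by (intro compact_Times compact_cball)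
  have "continuous_on S (\<lambda>x. G (fst x) (snd x) (u (fst x)))"
    using contF continuous_on_subset by blast
  then have uc: "uniformly_continuous_on S (\<lambda>x. G (fst x) (snd x) (u (fst x)))"
    using compact_uniformly_continuous cS by blast
  obtain p0 where p0: "p0 \<in> cball 0 P0" "\<forall>p\<in>cball 0 P0. G z p0 (u z) \<le> G z p (u z)"
    using continuous_attains_inf[OF compact_cball _ continuous_on_subset[OF contGp[of z]], of 0 P0] P0pos
    by auto
  define m where "m = G z p0 (u z)"
  have m: "m > 0" using pos by (simp add: m_def)
  obtain d where d: "d > 0" "\<forall>x\<in>S. \<forall>x'\<in>S. dist x' x < d \<longrightarrow>
      dist (G (fst x') (snd x') (u (fst x'))) (G (fst x) (snd x) (u (fst x))) < m"
    using uc m unfolding uniformly_continuous_on_def by metis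
  have small: "G w p (u w) > 0" if "\<bar>w - z\<bar> < min d 1" "\<bar>p\<bar> \<le> P0" for w p
  proof -
    have in1: "(z, p) \<in> S" "(w, p) \<in> S" using that by (auto simp: S_def dist_real_def)
    have "dist (w, p) (z, p) < d" using that by (simp add: dist_Pair_Pair dist_real_def)
    then have "dist (G w p (u w)) (G z p (u z)) < m" using d in1 by force
    moreover have "G z p (u z) \<ge> m" using p0 that by (auto simp: m_def dist_real_def)
    ultimately show ?thesis by (auto simp: dist_real_def)
  qed
  show False
    apply (rule allpos_contra[of "min (min d 1) (min (min r1 r2) (min r3 r4))" z])
    using d r1 r2 r3 r4 apply simp
  proof (intro allI impI)
    fix w p assume "\<bar>w - z\<bar> < min (min d 1) (min (min r1 r2) (min r3 r4))"
    then show "G w p (u w) > 0" using big[of w p] small[of w p] by (cases "\<bar>p\<bar> \<le> P0") auto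
  qed
qed

lemma Zbdd: "\<exists>C. \<forall>p\<in>Zs z. \<bar>p\<bar> \<le> C"
proof -
  obtain C where C: "\<forall>p. \<bar>p\<bar> - C \<le> G z p (u z)" using coer by blast
  show ?thesis
  proof (rule exI[of _ C], intro ballI)
    fix p assume "p \<in> Zs z"
    then show "\<bar>p\<bar> \<le> C" using C[rule_format, of p] by (simp add: Zs_def)
  qed
qed

lemma Zclosed: "closed (Zs z)"
proof -
  have "closed {p. G z p (u z) \<le> 0}"
    by (rule closed_Collect_le[OF contGp continuous_on_const])
  then show ?thesis by (simp add: Zs_def)
qed

lemma Z_bdd_above: "bdd_above (Zs z)"
proof -
  obtain C where "\<forall>p\<in>Zs z. \<bar>p\<bar> \<le> C" using Zbdd by blast
  then show ?thesis by (intro bdd_aboveI[of _ C]) auto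
qed

lemma Z_bdd_below: "bdd_below (Zs z)"
proof -
  obtain C where "\<forall>p\<in>Zs z. \<bar>p\<bar> \<le> C" using Zbdd by blast
  then show ?thesis by (intro bdd_belowI[of _ "-C"]) force
qed

lemma a_in: "a z \<in> Zs z"
  unfolding a_def using closed_contains_Inf[OF Zne Z_bdd_below Zclosed] .

lemma b_in: "b z \<in> Zs z"
  unfolding b_def using closed_contains_Sup[OF Zne Z_bdd_above Zclosed] .

lemma Zchar: "G z p (u z) \<le> 0 \<longleftrightarrow> a z \<le> p \<and> p \<le> b z"
proof
  assume "G z p (u z) \<le> 0"
  then have "p \<in> Zs z" by (simp add: Zs_def)
  then show "a z \<le> p \<and> p \<le> b z" unfolding a_def b_def
    using cInf_lower[OF _ Z_bdd_below] cSup_upper[OF _ Z_bdd_above] by auto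
next
  assume "a z \<le> p \<and> p \<le> b z"
  then have "G z p (u z) \<le> max (G z (a z) (u z)) (G z (b z) (u z))"
    using sconv_le_max[OF cvx] by blast
  moreover have "G z (a z) (u z) \<le> 0" "G z (b z) (u z) \<le> 0" using a_in b_in by (auto simp: Zs_def)
  ultimately show "G z p (u z) \<le> 0" by linarith
qed

lemma a_le_b: "a z \<le> b z"
  using a_in[of z] Zchar[of z "a z"] by (simp add: Zs_def)

lemma Zneg: "a z < p \<Longrightarrow> p < b z \<Longrightarrow> G z p (u z) < 0"
proof -
  assume "a z < p" "p < b z"
  then have "G z p (u z) < max (G z (a z) (u z)) (G z (b z) (u z))"
    using sconv_lt_max[OF cvx, of "a z" p "b z"] by blast
  moreover have "G z (a z) (u z) \<le> 0" "G z (b z) (u z) \<le> 0" using a_in b_in by (auto simp: Zs_def)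
  ultimately show ?thesis by linarith
qed

lemma Zpos: "p < a z \<or> p > b z \<Longrightarrow> G z p (u z) > 0"
  using Zchar[of z p] by auto

lemma pos_right:
  assumes "q > b z"
  shows "\<exists>r>0. \<forall>w. \<bar>w - z\<bar> < r \<longrightarrow> (\<forall>p\<ge>q. G w p (u w) > 0)"
proof -
  define p1 where "p1 = (b z + q) / 2"
  have p1: "b z < p1" "p1 < q" using assms by (auto simp: p1_def)
  have f1: "G z p1 (u z) > 0" using Zpos p1 by auto
  have "G z (b z) (u z) \<le> 0" using b_in by (simp add: Zs_def)
  then have "G z p1 (u z) < G z q (u z)"
    using sconv_mono_right[OF cvx, of "b z" p1 q] p1 f1 by auto
  then have f2: "G z q (u z) - G z p1 (u z) > 0" by simp
  obtain r1 where r1: "r1 > 0" "\<forall>w. \<bar>w - z\<bar> < r1 \<longrightarrow> G w p1 (u w) > 0"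
    using cont_gt[OF isContGw f1] by auto
  obtain r2 where r2: "r2 > 0" "\<forall>w. \<bar>w - z\<bar> < r2 \<longrightarrow> G w q (u w) - G w p1 (u w) > 0"
    using cont_gt[OF isContGw2 f2] by auto
  show ?thesis
  proof (intro exI[of _ "min r1 r2"] conjI allI impI)
    fix w p assume w: "\<bar>w - z\<bar> < min r1 r2" and p: "q \<le> p"
    have g: "G w p1 (u w) > 0" "G w q (u w) > G w p1 (u w)" using w r1 r2 by auto
    show "G w p (u w) > 0"
    proof (cases "p = q")
      case False
      then have "G w q (u w) < G w p (u w)"
        using sconv_mono_right[OF cvx, of p1 q p] p p1 g by auto
      then show ?thesis using g by auto
    qed (use g in auto)
  qed (use r1 r2 in auto)
qed

lemma pos_left:
  assumes "q < a z"
  shows "\<exists>r>0. \<forall>w. \<bar>w - z\<bar> < r \<longrightarrow> (\<forall>p\<le>q. G w p (u w) > 0)"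
proof -
  define p1 where "p1 = (a z + q) / 2"
  have p1: "p1 < a z" "q < p1" using assms by (auto simp: p1_def)
  have f1: "G z p1 (u z) > 0" using Zpos p1 by auto
  have "G z (a z) (u z) \<le> 0" using a_in by (simp add: Zs_def)
  then have "G z p1 (u z) < G z q (u z)"
    using sconv_mono_left[OF cvx, of q p1 "a z"] p1 f1 by auto
  then have f2: "G z q (u z) - G z p1 (u z) > 0" by simp
  obtain r1 where r1: "r1 > 0" "\<forall>w. \<bar>w - z\<bar> < r1 \<longrightarrow> G w p1 (u w) > 0"
    using cont_gt[OF isContGw f1] by auto
  obtain r2 where r2: "r2 > 0" "\<forall>w. \<bar>w - z\<bar> < r2 \<longrightarrow> G w q (u w) - G w p1 (u w) > 0"
    using cont_gt[OF isContGw2 f2] by auto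
  show ?thesis
  proof (intro exI[of _ "min r1 r2"] conjI allI impI)
    fix w p assume w: "\<bar>w - z\<bar> < min r1 r2" and p: "p \<le> q"
    have g: "G w p1 (u w) > 0" "G w q (u w) > G w p1 (u w)" using w r1 r2 by auto
    show "G w p (u w) > 0"
    proof (cases "p = q")
      case False
      then have "G w q (u w) < G w p (u w)"
        using sconv_mono_left[OF cvx, of p q p1] p p1 g by auto
      then show ?thesis using g by auto
    qed (use g in auto)
  qed (use r1 r2 in auto)
qed

lemma neg_int:
  assumes "a z < s1" "s1 \<le> s2" "s2 < b z"
  shows "\<exists>r>0. \<forall>w. \<bar>w - z\<bar> < r \<longrightarrow> (\<forall>p. s1 \<le> p \<and> p \<le> s2 \<longrightarrow> G w p (u w) < 0)"
proof -
  have f1: "G z s1 (u z) < 0" "G z s2 (u z) < 0" using Zneg assms by auto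
  obtain r1 where r1: "r1 > 0" "\<forall>w. \<bar>w - z\<bar> < r1 \<longrightarrow> G w s1 (u w) < 0"
    using cont_lt[OF isContGw f1(1)] by auto
  obtain r2 where r2: "r2 > 0" "\<forall>w. \<bar>w - z\<bar> < r2 \<longrightarrow> G w s2 (u w) < 0"
    using cont_lt[OF isContGw f1(2)] by auto
  show ?thesis
  proof (intro exI[of _ "min r1 r2"] conjI allI impI)
    fix w p assume w: "\<bar>w - z\<bar> < min r1 r2" and p: "s1 \<le> p \<and> p \<le> s2"
    have "G w p (u w) \<le> max (G w s1 (u w)) (G w s2 (u w))"
      using sconv_le_max[OF cvx] p by blast
    moreover have "G w s1 (u w) < 0" "G w s2 (u w) < 0" using w r1 r2 by auto
    ultimately show "G w p (u w) < 0" by linarith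
  qed (use r1 r2 in auto)
qed

end

context visc begin

definition RD where "RD z c \<longleftrightarrow> (\<forall>\<epsilon>>0. \<exists>d>0. \<forall>y. z < y \<and> y < z + d \<longrightarrow> \<bar>(u y - u z)/(y - z) - c\<bar> < \<epsilon>)"
definition LD where "LD z c \<longleftrightarrow> (\<forall>\<epsilon>>0. \<exists>d>0. \<forall>y. z - d < y \<and> y < z \<longrightarrow> \<bar>(u y - u z)/(y - z) - c\<bar> < \<epsilon>)"
definition freq where "freq z s \<longleftrightarrow> (\<forall>e>0. \<exists>y. z < y \<and> y < z + e \<and> u y - u z < s * (y - z))"

lemma bar_right:
  assumes r: "r > 0" and M: "\<forall>w. x \<le> w \<and> w \<le> x + r \<longrightarrow> \<bar>u w\<bar> \<le> M"
  and h: "0 < h" "h < r" "(2*M + \<bar>q\<bar>*r + 1)/r^2 * h < \<delta>"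
  and jump: "u (x+h) - u x > (q + \<delta>) * h"
  shows "\<exists>w p. x < w \<and> w < x + r \<and> p \<ge> q \<and> G w p (u w) \<le> 0"
proof -
  define K where "K = (2*M + \<bar>q\<bar>*r + 1)/r^2"
  have M0: "M \<ge> 0" using M[rule_format, of x] r by auto
  have Kpos: "K > 0" using M0 r by (auto simp: K_def intro!: divide_pos_pos add_nonneg_pos)
  have Kr: "K * r^2 = 2*M + \<bar>q\<bar>*r + 1" using r by (simp add: K_def)
  define \<Phi> where "\<Phi> y = u y - (q*(y-x) + K*(y-x)^2)" for y
  have "continuous_on {x..x+r} \<Phi>" unfolding \<Phi>_def
    by (intro continuous_intros continuous_on_subset[OF contu]) auto
  from attains_max[OF _ this] r obtain w where
    w: "x \<le> w" "w \<le> x + r" "\<forall>y. x \<le> y \<and> y \<le> x + r \<longrightarrow> \<Phi> y \<le> \<Phi> w" by auto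
  have "\<Phi> (x+h) \<le> \<Phi> w" using w h by auto
  have "\<Phi> (x+h) = u (x+h) - q*h - K*h^2" by (simp add: \<Phi>_def)
  also have "\<dots> > u x + \<delta>*h - K*h*h" using jump by (simp add: algebra_simps power2_eq_square)
  finally have "\<Phi> (x+h) > u x + h*(\<delta> - K*h)" by (simp add: algebra_simps)
  moreover have "h*(\<delta> - K*h) > 0" using h by (simp add: K_def)
  ultimately have A: "\<Phi> (x+h) > \<Phi> x" by (simp add: \<Phi>_def)
  have "\<Phi> (x+r) = u (x+r) - q*r - K*r^2" by (simp add: \<Phi>_def)
  also have "\<dots> = u (x+r) - q*r - (2*M + \<bar>q\<bar>*r + 1)" using Kr by simp
  also have "\<dots> < - M" using M[rule_format, of "x+r"] r abs_ge_self[of q]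
    by (smt (verit) mult_right_mono abs_le_D2 mult_minus_left)
  also have "\<dots> \<le> \<Phi> x" using M[rule_format, of x] r by (simp add: \<Phi>_def)
  finally have B: "\<Phi> (x+r) < \<Phi> x" .
  have "w \<noteq> x" using A \<open>\<Phi> (x+h) \<le> \<Phi> w\<close> by auto
  moreover have "w \<noteq> x + r" using A B \<open>\<Phi> (x+h) \<le> \<Phi> w\<close> by auto
  ultimately have w2: "x < w" "w < x + r" using w by auto
  have "local_max_at (\<lambda>y. u y - (q*(y-x) + K*(y-x)^2)) w"
    using interior_max_local[OF w2 w(3)] unfolding \<Phi>_def .
  from sub[OF quad_C1 this] have "G w (q + 2*K*(w-x)) (u w) \<le> 0" by (simp add: quad_deriv)
  moreover have "q + 2*K*(w-x) \<ge> q" using Kpos w2 by simp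
  ultimately show ?thesis using w2 by blast
qed

lemma bar_left:
  assumes r: "r > 0" and M: "\<forall>w. y - r \<le> w \<and> w \<le> y \<longrightarrow> \<bar>u w\<bar> \<le> M"
  and h: "0 < h" "h < r" "(2*M + \<bar>q\<bar>*r + 1)/r^2 * h < \<delta>"
  and jump: "u (y-h) - u y > (\<delta> - q) * h"
  shows "\<exists>w p. y - r < w \<and> w < y \<and> p \<le> q \<and> G w p (u w) \<le> 0"
proof -
  define K where "K = (2*M + \<bar>q\<bar>*r + 1)/r^2"
  have M0: "M \<ge> 0" using M[rule_format, of y] r by auto
  have Kpos: "K > 0" using M0 r by (auto simp: K_def intro!: divide_pos_pos add_nonneg_pos)
  have Kr: "K * r^2 = 2*M + \<bar>q\<bar>*r + 1" using r by (simp add: K_def)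
  define \<Phi> where "\<Phi> w = u w - (q*(w-y) + K*(w-y)^2)" for w
  have "continuous_on {y-r..y} \<Phi>" unfolding \<Phi>_def
    by (intro continuous_intros continuous_on_subset[OF contu]) auto
  from attains_max[OF _ this] r obtain w where
    w: "y - r \<le> w" "w \<le> y" "\<forall>x. y - r \<le> x \<and> x \<le> y \<longrightarrow> \<Phi> x \<le> \<Phi> w" by auto
  have "\<Phi> (y-h) \<le> \<Phi> w" using w h by auto
  have "\<Phi> (y-h) = u (y-h) + q*h - K*h^2" by (simp add: \<Phi>_def power2_eq_square)
  also have "\<dots> > u y + \<delta>*h - K*h*h" using jump by (simp add: algebra_simps power2_eq_square)
  finally have "\<Phi> (y-h) > u y + h*(\<delta> - K*h)" by (simp add: algebra_simps)
  moreover have "h*(\<delta> - K*h) > 0" using h by (simp add: K_def)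
  ultimately have A: "\<Phi> (y-h) > \<Phi> y" by (simp add: \<Phi>_def)
  have "\<Phi> (y-r) = u (y-r) + q*r - K*r^2" by (simp add: \<Phi>_def power2_eq_square)
  also have "\<dots> = u (y-r) + q*r - (2*M + \<bar>q\<bar>*r + 1)" using Kr by simp
  also have "\<dots> < - M" using M[rule_format, of "y-r"] r abs_ge_self[of q]
    by (smt (verit) mult_right_mono abs_le_D1)
  also have "\<dots> \<le> \<Phi> y" using M[rule_format, of y] r by (simp add: \<Phi>_def)
  finally have B: "\<Phi> (y-r) < \<Phi> y" .
  have "w \<noteq> y" using A \<open>\<Phi> (y-h) \<le> \<Phi> w\<close> by auto
  moreover have "w \<noteq> y - r" using A B \<open>\<Phi> (y-h) \<le> \<Phi> w\<close> by auto
  ultimately have w2: "y - r < w" "w < y" using w by auto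
  have "local_max_at (\<lambda>x. u x - (q*(x-y) + K*(x-y)^2)) w"
    using interior_max_local[OF w2 w(3)] unfolding \<Phi>_def .
  from sub[OF quad_C1 this] have "G w (q + 2*K*(w-y)) (u w) \<le> 0" by (simp add: quad_deriv)
  moreover have "q + 2*K*(w-y) \<le> q" using Kpos w2 by (simp add: mult_pos_neg mult_nonneg_nonpos)
  ultimately show ?thesis using w2 by blast
qed

end

context visc begin

lemma P1:
  assumes "\<delta> > 0"
  shows "\<exists>t>0. \<forall>y. z < y \<and> y < z + t \<longrightarrow> u y - u z \<le> (b z + \<delta>) * (y - z)"
proof -
  define q where "q = b z + \<delta>/2"
  obtain r0 where r0: "r0 > 0" "\<forall>w. \<bar>w - z\<bar> < r0 \<longrightarrow> (\<forall>p\<ge>q. G w p (u w) > 0)"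
    using pos_right[of z q] assms by (auto simp: q_def)
  define r where "r = min r0 1 / 2"
  have r: "r > 0" "r < r0" "r \<le> 1/2" using r0 by (auto simp: r_def)
  obtain M where M: "M \<ge> 0" "\<forall>w. \<bar>w - z\<bar> \<le> 1 \<longrightarrow> \<bar>u w\<bar> \<le> M" using ubound by blast
  define K where "K = (2*M + \<bar>q\<bar>*r + 1)/r^2"
  have Kpos: "K > 0" using M r by (auto simp: K_def intro!: divide_pos_pos add_nonneg_pos)
  define t where "t = min r ((\<delta>/2)/K)"
  have t: "t > 0" using r Kpos assms by (simp add: t_def)
  show ?thesis
  proof (intro exI[of _ t] conjI allI impI t)
    fix y assume y: "z < y \<and> y < z + t"
    show "u y - u z \<le> (b z + \<delta>) * (y - z)"
    proof (rule ccontr)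
      assume "\<not> ?thesis"
      then have j: "u (z + (y - z)) - u z > (q + \<delta>/2) * (y - z)" by (simp add: q_def algebra_simps)
      have h: "0 < y - z" "y - z < r" using y by (auto simp: t_def)
      have "K * (y - z) < K * ((\<delta>/2)/K)" using y Kpos by (intro mult_strict_left_mono) (auto simp: t_def)
      then have "K * (y - z) < \<delta>/2" using Kpos by simp
      then have h3: "(2*M + \<bar>q\<bar>*r + 1)/r^2 * (y - z) < \<delta>/2" by (simp add: K_def)
      have Mb: "\<forall>w. z \<le> w \<and> w \<le> z + r \<longrightarrow> \<bar>u w\<bar> \<le> M" using M r by auto
      obtain w p where wp: "z < w" "w < z + r" "p \<ge> q" "G w p (u w) \<le> 0"
        using bar_right[OF r(1) Mb h(1) h(2) h3 j] by blast
      have "\<bar>w - z\<bar> < r0" using wp r by auto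
      then have "G w p (u w) > 0" using r0(2) wp by blast
      then show False using wp by linarith
    qed
  qed
qed

lemma P2:
  assumes "\<delta> > 0"
  shows "\<exists>t>0. \<forall>y. z < y \<and> y < z + t \<longrightarrow> u y - u z \<ge> (a z - \<delta>) * (y - z)"
proof -
  define q where "q = a z - \<delta>/2"
  obtain r0 where r0: "r0 > 0" "\<forall>w. \<bar>w - z\<bar> < r0 \<longrightarrow> (\<forall>p\<le>q. G w p (u w) > 0)"
    using pos_left[of q z] assms by (auto simp: q_def)
  define r where "r = min r0 1 / 2"
  have r: "r > 0" "r < r0" "r \<le> 1/2" using r0 by (auto simp: r_def)
  obtain M where M: "M \<ge> 0" "\<forall>w. \<bar>w - z\<bar> \<le> 1 \<longrightarrow> \<bar>u w\<bar> \<le> M" using ubound by blast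
  define K where "K = (2*M + \<bar>q\<bar>*r + 1)/r^2"
  have Kpos: "K > 0" using M r by (auto simp: K_def intro!: divide_pos_pos add_nonneg_pos)
  define t where "t = min r ((\<delta>/2)/K)"
  have t: "t > 0" using r Kpos assms by (simp add: t_def)
  show ?thesis
  proof (intro exI[of _ t] conjI allI impI t)
    fix y assume y: "z < y \<and> y < z + t"
    show "u y - u z \<ge> (a z - \<delta>) * (y - z)"
    proof (rule ccontr)
      assume "\<not> ?thesis"
      then have j: "u (y - (y - z)) - u y > (\<delta>/2 - q) * (y - z)" by (simp add: q_def algebra_simps)
      have h: "0 < y - z" "y - z < r" using y by (auto simp: t_def)
      have "K * (y - z) < K * ((\<delta>/2)/K)" using y Kpos by (intro mult_strict_left_mono) (auto simp: t_def)
      then have "K * (y - z) < \<delta>/2" using Kpos by simp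
      then have h3: "(2*M + \<bar>q\<bar>*r + 1)/r^2 * (y - z) < \<delta>/2" by (simp add: K_def)
      have Mb: "\<forall>w. y - r \<le> w \<and> w \<le> y \<longrightarrow> \<bar>u w\<bar> \<le> M" using M r h by auto
      obtain w p where wp: "y - r < w" "w < y" "p \<le> q" "G w p (u w) \<le> 0"
        using bar_left[OF r(1) Mb h(1) h(2) h3 j] by blast
      have "\<bar>w - z\<bar> < r0" using wp r h by auto
      then have "G w p (u w) > 0" using r0(2) wp by blast
      then show False using wp by linarith
    qed
  qed
qed

lemma QC:
  assumes s: "a z < s" "s < b z" and fr: "freq z s"
  shows "\<exists>t>0. \<forall>x y. z \<le> x \<and> x < y \<and> y < z + t \<longrightarrow> u y - u x \<le> s * (y - x)"
proof -
  obtain r where r: "r > 0" "\<forall>w. \<bar>w - z\<bar> < r \<longrightarrow> (\<forall>p. s \<le> p \<and> p \<le> s \<longrightarrow> G w p (u w) < 0)"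
    using neg_int[of z s s] s by auto
  define g where "g y = u y - (s*(y - z) + 0*(y-z)^2)" for y
  have qc3: "g y \<ge> min (g x) (g w)" if xyw: "x < y" "y < w" "\<bar>x - z\<bar> < r" "\<bar>w - z\<bar> < r" for x y w
  proof -
    have "continuous_on {x..w} g" unfolding g_def
      by (intro continuous_intros continuous_on_subset[OF contu]) auto
    from attains_min[OF _ this] xyw obtain m where
      m: "x \<le> m" "m \<le> w" "\<forall>y. x \<le> y \<and> y \<le> w \<longrightarrow> g m \<le> g y" by auto
    show ?thesis
    proof (rule ccontr)
      assume "\<not> ?thesis"
      then have lt: "g y < min (g x) (g w)" by (simp only: not_le)
      have "g m \<le> g y" using m xyw by auto
      then have "m \<noteq> x" "m \<noteq> w" using lt by auto
      then have m2: "x < m" "m < w" using m by auto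
      have "local_min_at (\<lambda>y. u y - (s*(y - z) + 0*(y-z)^2)) m"
        using interior_min_local[OF m2 m(3)] unfolding g_def .
      from super[OF quad_C1 this] have "G m (deriv (\<lambda>y. s*(y - z) + 0*(y-z)^2) m) (u m) \<ge> 0" .
      then have "G m s (u m) \<ge> 0" unfolding quad_deriv by simp
      moreover have "\<bar>m - z\<bar> < r" using m2 xyw by auto
      ultimately show False using r by force
    qed
  qed
  have gz: "g y < g z" if "z < y" "u y - u z < s * (y - z)" for y
    using that by (simp add: g_def algebra_simps)
  show ?thesis
  proof (intro exI[of _ r] conjI allI impI r(1))
    fix x y assume xy: "z \<le> x \<and> x < y \<and> y < z + r"
    have ry: "\<bar>y - z\<bar> < r" "\<bar>x - z\<bar> < r" using xy by auto
    have "g y \<le> g x"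
    proof (rule ccontr)
      assume gxy: "\<not> g y \<le> g x"
      show False
      proof (cases "x = z")
        case True
        obtain y0 where y0: "z < y0" "y0 < z + (y - z)" "u y0 - u z < s * (y0 - z)"
          using fr xy unfolding freq_def by (metis diff_gt_0_iff_gt True)
        have "g y0 \<ge> min (g z) (g y)" using qc3[of z y0 y] y0 ry r by auto
        moreover have "g y0 < g z" using gz y0 by auto
        ultimately show False using gxy True by auto
      next
        case False
        then have xz: "z < x" using xy by auto
        obtain y0 where y0: "z < y0" "y0 < z + (x - z)" "u y0 - u z < s * (y0 - z)"
          using fr xz unfolding freq_def by (metis diff_gt_0_iff_gt)
        have "g y0 \<ge> min (g z) (g y)" using qc3[of z y0 y] y0 ry r xy by auto
        moreover have "g y0 < g z" using gz y0 by auto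
        ultimately have "g y < g z" by auto
        moreover have "g x \<ge> min (g z) (g y)" using qc3[of z x y] xz ry r xy by auto
        ultimately show False using gxy by auto
      qed
    qed
    then show "u y - u x \<le> s * (y - x)" by (simp add: g_def algebra_simps)
  qed
qed

end

lemma quot_bounds:
  fixes D N lo hi :: real
  assumes "D > 0" "lo*D \<le> N" "N \<le> hi*D"
  shows "lo \<le> N/D \<and> N/D \<le> hi"
  using assms by (simp add: field_simps)

context visc begin

lemma freq_mono: "freq z s \<Longrightarrow> s \<le> s' \<Longrightarrow> freq z s'"
  unfolding freq_def
proof (intro allI impI)
  fix e :: real assume f: "\<forall>e>0. \<exists>y. z < y \<and> y < z + e \<and> u y - u z < s * (y - z)" and ss: "s \<le> s'" and e: "e > 0"
  then obtain y where y: "z < y" "y < z + e" "u y - u z < s * (y - z)" by blast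
  have "s * (y - z) \<le> s' * (y - z)" using ss y by (intro mult_right_mono) auto
  then have "u y - u z < s' * (y - z)" using y by linarith
  then show "\<exists>y. z < y \<and> y < z + e \<and> u y - u z < s' * (y - z)" using y by blast
qed

lemma notfreq: "\<not> freq z s \<Longrightarrow> \<exists>t>0. \<forall>y. z < y \<and> y < z + t \<longrightarrow> u y - u z \<ge> s*(y - z)"
  unfolding freq_def by (meson not_less)

lemma L1:
  assumes s0: "s0 < b z" and fr: "freq z s0"
  shows "a z < b z \<and> (\<forall>c > a z. \<exists>t>0. \<forall>x y. z \<le> x \<and> x < y \<and> y < z+t \<longrightarrow> u y - u x \<le> c*(y-x))
     \<and> RD z (a z)"
proof -
  define A where "A = a z"
  define B where "B = b z"
  have AB: "A < B"
  proof (rule ccontr)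
    assume "\<not> A < B"
    then have AeB: "A = B" using a_le_b[of z] by (simp add: A_def B_def)
    obtain t where t: "t > 0" "\<forall>y. z < y \<and> y < z + t \<longrightarrow> u y - u z \<ge> (a z - (A - s0)) * (y - z)"
      using P2[of "A - s0" z] AeB s0 by (auto simp: B_def)
    obtain y where y: "z < y" "y < z + t" "u y - u z < s0 * (y - z)" using fr t unfolding freq_def by blast
    show False using t(2)[rule_format, of y] y by (simp add: A_def)
  qed
  define T where "T = {s. A < s \<and> s < B \<and> freq z s}"
  define s1 where "s1 = (max s0 A + B)/2"
  have s1T: "s1 \<in> T" unfolding T_def
    using AB s0 freq_mono[OF fr, of s1] by (auto simp: s1_def B_def max_def)
  have bddT: "bdd_below T" unfolding T_def by (rule bdd_belowI[of _ A]) auto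
  define r where "r = Inf T"
  have rA: "A \<le> r" unfolding r_def using s1T by (intro cInf_greatest) (auto simp: T_def)
  have rB: "r < B" using cInf_lower[OF s1T bddT] s1T by (auto simp: r_def T_def)
  have up: "\<exists>t>0. \<forall>x y. z \<le> x \<and> x < y \<and> y < z+t \<longrightarrow> u y - u x \<le> s*(y-x)" if "r < s" for s
  proof -
    obtain s' where s': "s' \<in> T" "s' < s" using \<open>r < s\<close> cInf_less_iff[of T s] s1T bddT
      by (auto simp: r_def)
    then obtain t where t: "t > 0" "\<forall>x y. z \<le> x \<and> x < y \<and> y < z + t \<longrightarrow> u y - u x \<le> s' * (y - x)"
      using QC[of z s'] by (auto simp: T_def A_def B_def)
    show ?thesis
    proof (intro exI[of _ t] conjI allI impI t(1))
      fix x y assume xy: "z \<le> x \<and> x < y \<and> y < z + t"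
      have "s' * (y - x) \<le> s * (y - x)" using s' xy by (intro mult_right_mono) auto
      moreover have "u y - u x \<le> s' * (y - x)" using t(2) xy by blast
      ultimately show "u y - u x \<le> s * (y - x)" by linarith
    qed
  qed
  have low: "\<exists>t>0. \<forall>y. z < y \<and> y < z+t \<longrightarrow> u y - u z \<ge> s*(y - z)" if "A < s" "s < r" for s
  proof -
    have "s \<notin> T" using cInf_lower[of s T] bddT that by (auto simp: r_def)
    then have "\<not> freq z s" using that rB by (auto simp: T_def)
    then show ?thesis by (rule notfreq)
  qed
  have rA2: "r = A"
  proof (rule ccontr)
    assume "r \<noteq> A"
    then have rA': "A < r" using rA by auto
    define mm where "mm = min (r - A) (B - r)"
    define \<eta> where "\<eta> = mm / 16"
    have mm: "mm > 0" "mm \<le> r - A" "mm \<le> B - r" using rA' rB by (auto simp: mm_def)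
    have \<eta>: "\<eta> > 0" "A < r - 8*\<eta>" "r + 8*\<eta> < B" "A < r - \<eta>" "r + \<eta> < B"
      using mm unfolding \<eta>_def by linarith+
    obtain t1 where t1: "t1 > 0" "\<forall>w. \<bar>w - z\<bar> < t1 \<longrightarrow> (\<forall>p. r - 8*\<eta> \<le> p \<and> p \<le> r + 8*\<eta> \<longrightarrow> G w p (u w) < 0)"
      using neg_int[of z "r - 8*\<eta>" "r + 8*\<eta>"] \<eta> by (auto simp: A_def B_def)
    obtain t2 where t2: "t2 > 0" "\<forall>x y. z \<le> x \<and> x < y \<and> y < z+t2 \<longrightarrow> u y - u x \<le> (r + \<eta>)*(y-x)"
      using up[of "r + \<eta>"] \<eta> by auto
    obtain t3 where t3: "t3 > 0" "\<forall>y. z < y \<and> y < z+t3 \<longrightarrow> u y - u z \<ge> (r - \<eta>)*(y - z)"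
      using low[of "r - \<eta>"] \<eta> by auto
    define h where "h = min (min t1 t2) t3 / 2"
    have h: "h > 0" "h < t1" "h < t2" "h < t3" using t1 t2 t3 by (auto simp: h_def)
    define \<rho> where "\<rho> = h/2"
    define m where "m = z + \<rho>"
    define K where "K = 4*\<eta>/\<rho>"
    have \<rho>: "\<rho> > 0" using h by (simp add: \<rho>_def)
    have K\<rho>: "K * \<rho> = 4*\<eta>" using \<rho> by (simp add: K_def)
    have f1: "u (z+h) - u z \<ge> (r - \<eta>)*h" using t3(2)[rule_format, of "z+h"] h by auto
    have f2: "u m - u z \<le> (r + \<eta>)*\<rho>" using t2(2)[rule_format, of z m] h \<rho> by (auto simp: m_def \<rho>_def)
    define \<Phi> where "\<Phi> w = u w - (r*(w - m) + (-K)*(w - m)^2)" for w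
    have e1: "\<Phi> (z+h) = u (z+h) - r*\<rho> + K*\<rho>*\<rho>"
      by (simp add: \<Phi>_def m_def \<rho>_def power2_eq_square algebra_simps)
    have e2: "\<Phi> z = u z + r*\<rho> + K*\<rho>*\<rho>"
      by (simp add: \<Phi>_def m_def \<rho>_def power2_eq_square algebra_simps)
    have e3: "\<Phi> m = u m" by (simp add: \<Phi>_def)
    have hh: "h = 2*\<rho>" by (simp add: \<rho>_def)
    have c1: "\<Phi> (z+h) > \<Phi> m"
    proof -
      have "\<Phi> (z+h) - \<Phi> m = (u (z+h) - u z) - (u m - u z) - r*\<rho> + (K*\<rho>)*\<rho>"
        using e1 e3 by simp
      also have "\<dots> \<ge> (r - \<eta>)*h - (r + \<eta>)*\<rho> - r*\<rho> + (4*\<eta>)*\<rho>" using f1 f2 K\<rho> by simp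
      also have "(r - \<eta>)*h - (r + \<eta>)*\<rho> - r*\<rho> + (4*\<eta>)*\<rho> = \<eta> * \<rho>" using hh by (simp add: algebra_simps)
      finally show ?thesis using \<eta> \<rho> by (smt (verit) mult_pos_pos)
    qed
    have c2: "\<Phi> z > \<Phi> m"
    proof -
      have "\<Phi> z - \<Phi> m = - (u m - u z) + r*\<rho> + (K*\<rho>)*\<rho>"
        using e2 e3 by simp
      also have "\<dots> \<ge> - ((r + \<eta>)*\<rho>) + r*\<rho> + (4*\<eta>)*\<rho>" using f2 K\<rho> by simp
      also have "- ((r + \<eta>)*\<rho>) + r*\<rho> + (4*\<eta>)*\<rho> = 3 * (\<eta> * \<rho>)" by (simp add: algebra_simps)
      finally show ?thesis using \<eta> \<rho> by (smt (verit) mult_pos_pos)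
    qed
    have "continuous_on {z..z+h} \<Phi>" unfolding \<Phi>_def
      by (intro continuous_intros continuous_on_subset[OF contu]) auto
    from attains_min[OF _ this] h obtain w where
      w: "z \<le> w" "w \<le> z+h" "\<forall>y. z \<le> y \<and> y \<le> z+h \<longrightarrow> \<Phi> w \<le> \<Phi> y" by auto
    have "\<Phi> w \<le> \<Phi> m" using w \<rho> hh by (auto simp: m_def)
    then have "w \<noteq> z" "w \<noteq> z + h" using c1 c2 by auto
    then have w2: "z < w" "w < z + h" using w by auto
    have "local_min_at (\<lambda>y. u y - (r*(y - m) + (-K)*(y - m)^2)) w"
      using interior_min_local[OF w2 w(3)] unfolding \<Phi>_def .
    from super[OF quad_C1 this] have g0: "G w (r + 2*(-K)*(w - m)) (u w) \<ge> 0"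
      unfolding quad_deriv .
    have wm: "\<bar>w - m\<bar> \<le> \<rho>" using w2 hh by (auto simp: m_def)
    have Kpos: "K \<ge> 0" using \<eta> \<rho> by (simp add: K_def)
    have "\<bar>2*K*(w - m)\<bar> \<le> 2*K*\<rho>" using wm Kpos
      by (simp add: abs_mult mult_left_mono)
    then have sl: "r - 8*\<eta> \<le> r + 2*(-K)*(w - m) \<and> r + 2*(-K)*(w - m) \<le> r + 8*\<eta>"
      using K\<rho> by (auto simp: abs_le_iff algebra_simps)
    have "\<bar>w - z\<bar> < t1" using w2 h by auto
    then have "G w (r + 2*(-K)*(w - m)) (u w) < 0" using t1(2) sl by blast
    then show False using g0 by linarith
  qed
  have chord: "\<forall>c > A. \<exists>t>0. \<forall>x y. z \<le> x \<and> x < y \<and> y < z+t \<longrightarrow> u y - u x \<le> c*(y-x)"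
  proof (intro allI impI)
    fix c assume c: "c > A"
    obtain t where t: "t > 0" "\<forall>x y. z \<le> x \<and> x < y \<and> y < z+t \<longrightarrow> u y - u x \<le> (min c ((A+B)/2))*(y-x)"
      using up[of "min c ((A+B)/2)"] rA2 c AB by auto
    show "\<exists>t>0. \<forall>x y. z \<le> x \<and> x < y \<and> y < z+t \<longrightarrow> u y - u x \<le> c*(y-x)"
    proof (intro exI[of _ t] conjI allI impI t(1))
      fix x y assume xy: "z \<le> x \<and> x < y \<and> y < z + t"
      have "(min c ((A+B)/2)) * (y - x) \<le> c * (y - x)" using xy by (intro mult_right_mono) auto
      moreover have "u y - u x \<le> (min c ((A+B)/2)) * (y - x)" using t(2) xy by blast
      ultimately show "u y - u x \<le> c * (y - x)" by linarith
    qed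
  qed
  have RDA: "RD z A" unfolding RD_def
  proof (intro allI impI)
    fix \<epsilon> :: real assume \<epsilon>: "\<epsilon> > 0"
    obtain t where t: "t > 0" "\<forall>x y. z \<le> x \<and> x < y \<and> y < z+t \<longrightarrow> u y - u x \<le> (A + \<epsilon>/2)*(y-x)"
      using chord \<epsilon> by (meson less_add_same_cancel1 half_gt_zero)
    obtain t' where t': "t' > 0" "\<forall>y. z < y \<and> y < z + t' \<longrightarrow> u y - u z \<ge> (a z - \<epsilon>/2) * (y - z)"
      using P2[of "\<epsilon>/2" z] \<epsilon> by auto
    show "\<exists>d>0. \<forall>y. z < y \<and> y < z + d \<longrightarrow> \<bar>(u y - u z) / (y - z) - A\<bar> < \<epsilon>"
    proof (intro exI[of _ "min t t'"] conjI allI impI)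
      fix y assume y: "z < y \<and> y < z + min t t'"
      have "(A - \<epsilon>/2) \<le> (u y - u z) / (y - z) \<and> (u y - u z) / (y - z) \<le> A + \<epsilon>/2"
        using quot_bounds[of "y - z" "A - \<epsilon>/2" "u y - u z" "A + \<epsilon>/2"] t(2)[rule_format, of z y] t'(2)[rule_format, of y] y
        by (auto simp: A_def)
      then show "\<bar>(u y - u z) / (y - z) - A\<bar> < \<epsilon>" using \<epsilon> by (simp add: abs_less_iff)
    qed (use t t' in auto)
  qed
  show ?thesis using AB chord RDA by (simp add: A_def B_def)
qed

lemma DR: "RD z (a z) \<or> RD z (b z)"
proof (cases "\<exists>s0 < b z. freq z s0")
  case True
  then show ?thesis using L1 by blast
next
  case False
  have "RD z (b z)" unfolding RD_def
  proof (intro allI impI)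
    fix \<epsilon> :: real assume \<epsilon>: "\<epsilon> > 0"
    obtain t where t: "t > 0" "\<forall>y. z < y \<and> y < z + t \<longrightarrow> u y - u z \<le> (b z + \<epsilon>/2) * (y - z)"
      using P1[of "\<epsilon>/2" z] \<epsilon> by auto
    have "\<not> freq z (b z - \<epsilon>/2)" using False \<epsilon> by auto
    then obtain t' where t': "t' > 0" "\<forall>y. z < y \<and> y < z + t' \<longrightarrow> u y - u z \<ge> (b z - \<epsilon>/2) * (y - z)"
      using notfreq by blast
    show "\<exists>d>0. \<forall>y. z < y \<and> y < z + d \<longrightarrow> \<bar>(u y - u z) / (y - z) - b z\<bar> < \<epsilon>"
    proof (intro exI[of _ "min t t'"] conjI allI impI)
      fix y assume y: "z < y \<and> y < z + min t t'"
      have "(b z - \<epsilon>/2) \<le> (u y - u z) / (y - z) \<and> (u y - u z) / (y - z) \<le> b z + \<epsilon>/2"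
        using quot_bounds[of "y - z" "b z - \<epsilon>/2" "u y - u z" "b z + \<epsilon>/2"] t(2)[rule_format, of y] t'(2)[rule_format, of y] y
        by auto
      then show "\<bar>(u y - u z) / (y - z) - b z\<bar> < \<epsilon>" using \<epsilon> by (simp add: abs_less_iff)
    qed (use t t' in auto)
  qed
  then show ?thesis by blast
qed

lemma L1':
  assumes ab: "a z < b z" and rd: "RD z (a z)"
  shows "\<forall>c > a z. \<exists>t>0. \<forall>x y. z \<le> x \<and> x < y \<and> y < z+t \<longrightarrow> u y - u x \<le> c*(y-x)"
proof -
  define s0 where "s0 = (a z + b z)/2"
  obtain d where d: "d > 0" "\<forall>y. z < y \<and> y < z + d \<longrightarrow> \<bar>(u y - u z)/(y - z) - a z\<bar> < (b z - a z)/2"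
    using rd ab unfolding RD_def by (metis diff_gt_0_iff_gt half_gt_zero)
  have "freq z s0" unfolding freq_def
  proof (intro allI impI)
    fix e :: real assume e: "e > 0"
    define y where "y = z + min d e / 2"
    have y: "z < y" "y < z + e" "y < z + d" using d e by (auto simp: y_def)
    define \<sigma> where "\<sigma> = (u y - u z)/(y - z)"
    have hh: "\<bar>\<sigma> - a z\<bar> < (b z - a z)/2" using d(2) y unfolding \<sigma>_def by blast
    have "\<sigma> - a z < (b z - a z)/2" using hh abs_less_iff by blast
    then have "\<sigma> < s0" unfolding s0_def by (simp add: field_simps)
    then have "(u y - u z)/(y - z) < s0" by (simp add: \<sigma>_def)
    then have "u y - u z < s0 * (y - z)" using y by (simp add: pos_divide_less_eq)
    then show "\<exists>y. z < y \<and> y < z + e \<and> u y - u z < s0 * (y - z)" using y by blast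
  qed
  moreover have "s0 < b z" using ab by (simp add: s0_def)
  ultimately show ?thesis using L1 by blast
qed

end

lemma local_max_mirror: "local_max_at g x \<Longrightarrow> local_max_at (\<lambda>y. g (- y)) (- x)"
  unfolding local_max_at_def
proof -
  assume "\<exists>e>0. \<forall>y. \<bar>y - x\<bar> < e \<longrightarrow> g y \<le> g x"
  then obtain e where e: "e > 0" "\<forall>y. \<bar>y - x\<bar> < e \<longrightarrow> g y \<le> g x" by blast
  show "\<exists>e>0. \<forall>y. \<bar>y - - x\<bar> < e \<longrightarrow> g (- y) \<le> g (- (- x))"
  proof (intro exI[of _ e] conjI allI impI e(1))
    fix y :: real assume "\<bar>y - - x\<bar> < e"
    then have "\<bar>(-y) - x\<bar> < e" by (simp add: abs_minus_commute)
    then show "g (- y) \<le> g (- (- x))" using e by simp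
  qed
qed

lemma local_min_mirror: "local_min_at g x \<Longrightarrow> local_min_at (\<lambda>y. g (- y)) (- x)"
  unfolding local_min_at_def
proof -
  assume "\<exists>e>0. \<forall>y. \<bar>y - x\<bar> < e \<longrightarrow> g x \<le> g y"
  then obtain e where e: "e > 0" "\<forall>y. \<bar>y - x\<bar> < e \<longrightarrow> g x \<le> g y" by blast
  show "\<exists>e>0. \<forall>y. \<bar>y - - x\<bar> < e \<longrightarrow> g (- (- x)) \<le> g (- y)"
  proof (intro exI[of _ e] conjI allI impI e(1))
    fix y :: real assume "\<bar>y - - x\<bar> < e"
    then have "\<bar>(-y) - x\<bar> < e" by (simp add: abs_minus_commute)
    then show "g (- (- x)) \<le> g (- y)" using e by simp
  qed
qed

lemma C1_mirror:
  assumes "\<phi> C1_differentiable_on UNIV"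
  shows "(\<lambda>y::real. \<phi> (- y)) C1_differentiable_on UNIV"
proof -
  have "(\<phi> \<circ> uminus) C1_differentiable_on UNIV"
    by (rule C1_differentiable_compose)
       (auto intro: C1_differentiable_on_subset[OF assms] simp: vimage_def minus_equation_iff[of _ "_::real"])
  then show ?thesis by (simp add: o_def)
qed

lemma deriv_mirror:
  assumes "(\<phi>::real\<Rightarrow>real) C1_differentiable_on UNIV"
  shows "deriv (\<lambda>y. \<phi> (- y)) (- x) = - deriv \<phi> x"
proof -
  have "\<phi> differentiable at x" using assms by (simp add: C1_differentiable_on_eq)
  then have "DERIV \<phi> x :> deriv \<phi> x" by (simp add: DERIV_deriv_iff_real_differentiable)
  then have "DERIV \<phi> (- (- x)) :> deriv \<phi> x" by simp
  then have "DERIV (\<lambda>y. \<phi> (- y)) (- x) :> - deriv \<phi> x" by (subst (asm) DERIV_mirror)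
  then show ?thesis by (rule DERIV_imp_deriv)
qed

context visc begin

lemma visc_refl: "visc (\<lambda>x p v. G (-x) (-p) v) (\<lambda>x. u (-x))"
proof
  have "continuous_on UNIV (\<lambda>z::real\<times>real\<times>real. (- fst z, - fst (snd z), snd (snd z)))"
    by (intro continuous_intros)
  from continuous_on_compose2[OF contG this]
  show "continuous_on UNIV (\<lambda>(x, p, v). G (- x) (- p) v)" by (simp add: case_prod_beta)
next
  fix x v
  show "sconv (\<lambda>p. G (- x) (- p) v)"
    unfolding sconv_def
  proof (intro allI impI)
    fix p q t :: real assume "p \<noteq> q" "0 < t" "t < 1"
    then have "G (-x) ((1-t)*(-p) + t*(-q)) v < (1-t) * G (-x) (-p) v + t * G (-x) (-q) v"
      using cvx[of "-x" v] unfolding sconv_def by (metis neg_equal_iff_equal)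
    then show "G (- x) (- ((1 - t) * p + t * q)) v < (1 - t) * G (- x) (- p) v + t * G (- x) (- q) v"
      by (simp add: algebra_simps)
  qed
next
  fix x v
  obtain C where "\<forall>p. \<bar>p\<bar> - C \<le> G (-x) p v" using coer by blast
  then show "\<exists>C. \<forall>p. \<bar>p\<bar> - C \<le> G (- x) (- p) v" by (metis abs_minus_cancel)
next
  show "continuous_on UNIV (\<lambda>x. u (- x))"
    by (intro continuous_on_compose2[OF contu] continuous_intros) auto
next
  fix \<phi> x
  assume C: "\<phi> C1_differentiable_on UNIV" and lm: "local_max_at (\<lambda>y. u (- y) - \<phi> y) x"
  have "local_max_at (\<lambda>y. u y - \<phi> (- y)) (- x)"
    using local_max_mirror[OF lm] by simp
  from sub[OF C1_mirror[OF C] this] have "G (- x) (deriv (\<lambda>y. \<phi> (- y)) (- x)) (u (- x)) \<le> 0" .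
  then show "G (- x) (- deriv \<phi> x) (u (- x)) \<le> 0" using deriv_mirror[OF C] by simp
next
  fix \<phi> x
  assume C: "\<phi> C1_differentiable_on UNIV" and lm: "local_min_at (\<lambda>y. u (- y) - \<phi> y) x"
  have "local_min_at (\<lambda>y. u y - \<phi> (- y)) (- x)"
    using local_min_mirror[OF lm] by simp
  from super[OF C1_mirror[OF C] this] have "G (- x) (deriv (\<lambda>y. \<phi> (- y)) (- x)) (u (- x)) \<ge> 0" .
  then show "G (- x) (- deriv \<phi> x) (u (- x)) \<ge> 0" using deriv_mirror[OF C] by simp
qed

lemma refl_ab:
  "visc.a (\<lambda>x p v. G (-x) (-p) v) (\<lambda>x. u (-x)) z = - b (-z)"
  "visc.b (\<lambda>x p v. G (-x) (-p) v) (\<lambda>x. u (-x)) z = - a (-z)"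
proof -
  interpret R: visc "\<lambda>x p v. G (-x) (-p) v" "\<lambda>x. u (-x)" by (rule visc_refl)
  have ch: "R.a z \<le> p \<and> p \<le> R.b z \<longleftrightarrow> - b (-z) \<le> p \<and> p \<le> - a (-z)" for p
    using R.Zchar[of z p] Zchar[of "-z" "-p"] by auto
  have "R.a z \<le> R.b z" "- b (-z) \<le> - a (-z)" using R.a_le_b a_le_b by auto
  then show "R.a z = - b (-z)" "R.b z = - a (-z)"
    using ch[of "R.a z"] ch[of "- b (-z)"] ch[of "R.b z"] ch[of "- a (-z)"] by auto
qed

lemma refl_RD:
  assumes "visc.RD (\<lambda>x. u (-x)) (-z) c"
  shows "LD z (- c)"
  unfolding LD_def
proof (intro allI impI)
  fix \<epsilon> :: real assume \<epsilon>: "\<epsilon> > 0"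
  interpret R: visc "\<lambda>x p v. G (-x) (-p) v" "\<lambda>x. u (-x)" by (rule visc_refl)
  obtain d where d: "d > 0" "\<forall>y. -z < y \<and> y < -z + d \<longrightarrow> \<bar>(u (-y) - u (- (-z)))/(y - (-z)) - c\<bar> < \<epsilon>"
    using assms \<epsilon> unfolding R.RD_def by blast
  show "\<exists>d>0. \<forall>y. z - d < y \<and> y < z \<longrightarrow> \<bar>(u y - u z) / (y - z) - - c\<bar> < \<epsilon>"
  proof (intro exI[of _ d] conjI allI impI d(1))
    fix y assume y: "z - d < y \<and> y < z"
    have "\<bar>(u (-(-y)) - u (- (-z)))/((-y) - (-z)) - c\<bar> < \<epsilon>" using d(2)[rule_format, of "-y"] y by auto
    moreover have "(u (-(-y)) - u (- (-z)))/((-y) - (-z)) - c = - ((u y - u z) / (y - z) - - c)"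
    proof -
      have "z - y = - (y - z)" by simp
      then have "(u y - u z) / (z - y) = - ((u y - u z) / (y - z))" by (metis divide_minus_right)
      then show ?thesis by simp
    qed
    ultimately show "\<bar>(u y - u z) / (y - z) - - c\<bar> < \<epsilon>" by simp
  qed
qed

lemma DL: "LD z (a z) \<or> LD z (b z)"
proof -
  interpret R: visc "\<lambda>x p v. G (-x) (-p) v" "\<lambda>x. u (-x)" by (rule visc_refl)
  have "R.RD (-z) (R.a (-z)) \<or> R.RD (-z) (R.b (-z))" by (rule R.DR)
  then show ?thesis using refl_RD refl_ab by fastforce
qed

end

context visc begin

lemma cont_b:
  assumes ab: "a z < b z"
  shows "isCont b z"
  unfolding continuous_at_eps_delta
proof (intro allI impI)
  fix \<epsilon> :: real assume \<epsilon>: "\<epsilon> > 0"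
  define e' where "e' = min (\<epsilon>/2) ((b z - a z)/2)"
  have e': "e' > 0" "e' < \<epsilon>" "a z < b z - e'" using \<epsilon> ab by (auto simp: e'_def min_def field_simps)
  obtain r1 where r1: "r1 > 0" "\<forall>w. \<bar>w - z\<bar> < r1 \<longrightarrow> (\<forall>p. b z - e' \<le> p \<and> p \<le> b z - e' \<longrightarrow> G w p (u w) < 0)"
    using neg_int[of z "b z - e'" "b z - e'"] e' by auto
  obtain r2 where r2: "r2 > 0" "\<forall>w. \<bar>w - z\<bar> < r2 \<longrightarrow> (\<forall>p\<ge>b z + \<epsilon>. G w p (u w) > 0)"
    using pos_right[of z "b z + \<epsilon>"] \<epsilon> by auto
  show "\<exists>d>0. \<forall>w. dist w z < d \<longrightarrow> dist (b w) (b z) < \<epsilon>"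
  proof (intro exI[of _ "min r1 r2"] conjI allI impI)
    fix w assume "dist w z < min r1 r2"
    then have w: "\<bar>w - z\<bar> < r1" "\<bar>w - z\<bar> < r2" by (auto simp: dist_real_def)
    have "G w (b z - e') (u w) < 0" using r1 w by auto
    then have "b z - e' \<le> b w" using Zchar[of w "b z - e'"] by auto
    moreover have "b w < b z + \<epsilon>"
    proof (rule ccontr)
      assume "\<not> ?thesis"
      then have "G w (b w) (u w) > 0" using r2 w by auto
      moreover have "G w (b w) (u w) \<le> 0" using b_in by (simp add: Zs_def)
      ultimately show False by simp
    qed
    ultimately show "dist (b w) (b z) < \<epsilon>" using e' by (auto simp: dist_real_def abs_less_iff)
  qed (use r1 r2 in auto)
qed

lemma cont_a:
  assumes ab: "a z < b z"
  shows "isCont a z"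
  unfolding continuous_at_eps_delta
proof (intro allI impI)
  fix \<epsilon> :: real assume \<epsilon>: "\<epsilon> > 0"
  define e' where "e' = min (\<epsilon>/2) ((b z - a z)/2)"
  have e': "e' > 0" "e' < \<epsilon>" "a z + e' < b z" using \<epsilon> ab by (auto simp: e'_def min_def field_simps)
  obtain r1 where r1: "r1 > 0" "\<forall>w. \<bar>w - z\<bar> < r1 \<longrightarrow> (\<forall>p. a z + e' \<le> p \<and> p \<le> a z + e' \<longrightarrow> G w p (u w) < 0)"
    using neg_int[of z "a z + e'" "a z + e'"] e' by auto
  obtain r2 where r2: "r2 > 0" "\<forall>w. \<bar>w - z\<bar> < r2 \<longrightarrow> (\<forall>p\<le>a z - \<epsilon>. G w p (u w) > 0)"
    using pos_left[of "a z - \<epsilon>" z] \<epsilon> by auto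
  show "\<exists>d>0. \<forall>w. dist w z < d \<longrightarrow> dist (a w) (a z) < \<epsilon>"
  proof (intro exI[of _ "min r1 r2"] conjI allI impI)
    fix w assume "dist w z < min r1 r2"
    then have w: "\<bar>w - z\<bar> < r1" "\<bar>w - z\<bar> < r2" by (auto simp: dist_real_def)
    have "G w (a z + e') (u w) < 0" using r1 w by auto
    then have "a w \<le> a z + e'" using Zchar[of w "a z + e'"] by auto
    moreover have "a w > a z - \<epsilon>"
    proof (rule ccontr)
      assume "\<not> ?thesis"
      then have "G w (a w) (u w) > 0" using r2 w by auto
      moreover have "G w (a w) (u w) \<le> 0" using a_in by (simp add: Zs_def)
      ultimately show False by simp
    qed
    ultimately show "dist (a w) (a z) < \<epsilon>" using e' by (auto simp: dist_real_def abs_less_iff)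
  qed (use r1 r2 in auto)
qed

lemma noconvexkink:
  assumes ab: "a z < b z" and L: "LD z (a z)" and R: "RD z (b z)"
  shows False
proof -
  define s where "s = (a z + b z)/2"
  have e: "(b z - a z)/2 > 0" using ab by simp
  obtain d1 where d1: "d1 > 0" "\<forall>y. z - d1 < y \<and> y < z \<longrightarrow> \<bar>(u y - u z)/(y - z) - a z\<bar> < (b z - a z)/2"
    using L e unfolding LD_def by blast
  obtain d2 where d2: "d2 > 0" "\<forall>y. z < y \<and> y < z + d2 \<longrightarrow> \<bar>(u y - u z)/(y - z) - b z\<bar> < (b z - a z)/2"
    using R e unfolding RD_def by blast
  have "local_min_at (\<lambda>y. u y - (s*(y - z) + 0*(y-z)^2)) z"
    unfolding local_min_at_def
  proof (intro exI[of _ "min d1 d2"] conjI allI impI)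
    fix y assume y: "\<bar>y - z\<bar> < min d1 d2"
    consider "y < z" | "y = z" | "y > z" by linarith
    then show "u z - (s * (z - z) + 0 * (z - z)\<^sup>2) \<le> u y - (s * (y - z) + 0 * (y - z)\<^sup>2)"
    proof cases
      case 1
      define \<sigma> where "\<sigma> = (u y - u z)/(y - z)"
      have "\<bar>\<sigma> - a z\<bar> < (b z - a z)/2" using d1 y 1 unfolding \<sigma>_def by auto
      then have "\<sigma> - a z < (b z - a z)/2" using abs_less_iff by blast
      then have "\<sigma> < s" by (simp add: s_def field_simps)
      then have "\<sigma> * (y - z) \<ge> s * (y - z)" using 1 by (intro mult_right_mono_neg) auto
      moreover have "\<sigma> * (y - z) = u y - u z" using 1 by (simp add: \<sigma>_def)
      ultimately show ?thesis by simp
    next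
      case 3
      define \<sigma> where "\<sigma> = (u y - u z)/(y - z)"
      have "\<bar>\<sigma> - b z\<bar> < (b z - a z)/2" using d2 y 3 unfolding \<sigma>_def by auto
      then have "- (\<sigma> - b z) < (b z - a z)/2" using abs_less_iff by blast
      then have "\<sigma> > s" by (simp add: s_def field_simps)
      then have "\<sigma> * (y - z) \<ge> s * (y - z)" using 3 by (intro mult_right_mono) auto
      moreover have "\<sigma> * (y - z) = u y - u z" using 3 by (simp add: \<sigma>_def)
      ultimately show ?thesis by simp
    qed simp
  qed (use d1 d2 in auto)
  from super[OF quad_C1 this] have "G z (deriv (\<lambda>y. s*(y - z) + 0*(y-z)^2) z) (u z) \<ge> 0" .
  then have "G z s (u z) \<ge> 0" unfolding quad_deriv by simp
  moreover have "G z s (u z) < 0" using Zneg ab by (simp add: s_def field_simps)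
  ultimately show False by simp
qed

lemma RL_deriv:
  assumes "RD z c" "LD z c"
  shows "(u has_real_derivative c) (at z)"
proof -
  have "(\<lambda>y. (u y - u z)/(y - z)) \<midarrow>z\<rightarrow> c"
  proof (rule LIM_I)
    fix r :: real assume r: "r > 0"
    obtain d1 where d1: "d1 > 0" "\<forall>y. z < y \<and> y < z + d1 \<longrightarrow> \<bar>(u y - u z)/(y - z) - c\<bar> < r"
      using assms(1) r unfolding RD_def by blast
    obtain d2 where d2: "d2 > 0" "\<forall>y. z - d2 < y \<and> y < z \<longrightarrow> \<bar>(u y - u z)/(y - z) - c\<bar> < r"
      using assms(2) r unfolding LD_def by blast
    show "\<exists>s>0. \<forall>x. x \<noteq> z \<and> norm (x - z) < s \<longrightarrow> norm ((u x - u z)/(x - z) - c) < r"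
    proof (intro exI[of _ "min d1 d2"] conjI allI impI)
      fix x assume x: "x \<noteq> z \<and> norm (x - z) < min d1 d2"
      show "norm ((u x - u z)/(x - z) - c) < r"
      proof (cases "x < z")
        case True then show ?thesis using d2 x by auto
      next
        case False then show ?thesis using d1 x by auto
      qed
    qed (use d1 d2 in auto)
  qed
  then show ?thesis by (simp add: has_field_derivative_iff)
qed

lemma prop_right:
  assumes ab: "\<forall>z. a z < b z" and rd: "RD z (a z)"
  shows "\<exists>t>0. \<forall>w. z < w \<and> w < z + t \<longrightarrow> (u has_real_derivative a w) (at w)"
proof -
  define c where "c = a z + (b z - a z)/3"
  have c: "c > a z" using ab by (simp add: c_def)
  obtain t0 where t0: "t0 > 0" "\<forall>x y. z \<le> x \<and> x < y \<and> y < z+t0 \<longrightarrow> u y - u x \<le> c*(y-x)"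
    using L1'[OF ab[rule_format] rd] c by blast
  have "b z > c" using ab by (simp add: c_def field_simps)
  obtain t1 where t1: "t1 > 0" "\<forall>w. \<bar>w - z\<bar> < t1 \<longrightarrow> b w > c"
    using cont_gt[OF cont_b[OF ab[rule_format]] \<open>b z > c\<close>] by auto
  show ?thesis
  proof (intro exI[of _ "min t0 t1"] conjI allI impI)
    fix w assume w: "z < w \<and> w < z + min t0 t1"
    have bw: "b w > c" using t1 w by auto
    have "RD w (a w)"
    proof -
      have "\<not> RD w (b w)"
      proof
        assume "RD w (b w)"
        then obtain d where d: "d > 0" "\<forall>y. w < y \<and> y < w + d \<longrightarrow> \<bar>(u y - u w)/(y - w) - b w\<bar> < b w - c"
          using bw unfolding RD_def by (meson diff_gt_0_iff_gt)
        define md where "md = min d (z + t0 - w)"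
        define y where "y = w + md / 2"
        have wt: "w < z + t0" using w by auto
        have mm: "md \<le> z + t0 - w" "md > 0" "md \<le> d"
          using wt d by (auto simp: md_def)
        have y1: "w < y" using mm unfolding y_def by linarith
        have y2: "y < w + d" using mm unfolding y_def by linarith
        have y3: "y < z + t0" using mm unfolding y_def by linarith
        note y = y1 y2 y3
        have "\<bar>(u y - u w)/(y - w) - b w\<bar> < b w - c" using d y by auto
        then have "(u y - u w)/(y - w) > c" by (auto simp: abs_less_iff)
        then have "u y - u w > c * (y - w)" using y by (simp add: pos_less_divide_eq)
        moreover have "u y - u w \<le> c * (y - w)" using t0(2)[rule_format, of w y] y w by auto
        ultimately show False by simp
      qed
      then show ?thesis using DR by blast
    qed
    moreover have "LD w (a w)"
    proof -
      have "\<not> LD w (b w)"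
      proof
        assume "LD w (b w)"
        then obtain d where d: "d > 0" "\<forall>y. w - d < y \<and> y < w \<longrightarrow> \<bar>(u y - u w)/(y - w) - b w\<bar> < b w - c"
          using bw unfolding LD_def by (meson diff_gt_0_iff_gt)
        define md where "md = min d (w - z)"
        define y where "y = w - md / 2"
        have mm: "md \<le> w - z" "md > 0" "md \<le> d"
          using w d by (auto simp: md_def)
        have y1: "y < w" using mm unfolding y_def by linarith
        have y2: "w - d < y" using mm unfolding y_def by linarith
        have y3: "z < y" using mm unfolding y_def by linarith
        note y = y1 y2 y3
        have "\<bar>(u y - u w)/(y - w) - b w\<bar> < b w - c" using d y by auto
        then have "(u y - u w)/(y - w) > c" by (auto simp: abs_less_iff)
        moreover have "(u y - u w)/(y - w) = (u w - u y)/(w - y)"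
          by (metis minus_diff_eq divide_minus_left divide_minus_right)
        ultimately have "(u w - u y)/(w - y) > c" by simp
        then have "u w - u y > c * (w - y)" using y by (simp add: pos_less_divide_eq)
        moreover have "u w - u y \<le> c * (w - y)" using t0(2)[rule_format, of y w] y w by auto
        ultimately show False by simp
      qed
      then show ?thesis using DL by blast
    qed
    ultimately show "(u has_real_derivative a w) (at w)" by (rule RL_deriv)
  qed (use t0 t1 in auto)
qed

lemma left_limit:
  assumes ab: "a S < b S" and t: "t > 0" and D: "\<forall>y. S - t < y \<and> y < S \<longrightarrow> (u has_real_derivative a y) (at y)"
  shows "LD S (a S)"
  unfolding LD_def
proof (intro allI impI)
  fix \<epsilon> :: real assume \<epsilon>: "\<epsilon> > 0"
  obtain d where d: "d > 0" "\<forall>w. dist w S < d \<longrightarrow> dist (a w) (a S) < \<epsilon>"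
    using cont_a[OF ab] \<epsilon> unfolding continuous_at_eps_delta by blast
  show "\<exists>d>0. \<forall>y. S - d < y \<and> y < S \<longrightarrow> \<bar>(u y - u S) / (y - S) - a S\<bar> < \<epsilon>"
  proof (intro exI[of _ "min d t"] conjI allI impI)
    fix y assume y: "S - min d t < y \<and> y < S"
    have md: "min d t \<le> d" "min d t \<le> t" by auto
    have yS: "y < S" "S - t < y" "S - d < y" using y md by linarith+
    have cont: "continuous_on {y..S} u" using contu continuous_on_subset by blast
    have dif: "u differentiable (at x)" if "y < x" "x < S" for x
    proof -
      have "S - t < x" using that yS by linarith
      then have "(u has_real_derivative a x) (at x)" using D that by blast
      then show ?thesis
        by (rule differentiableI[OF has_field_derivative_imp_has_derivative])
    qed
    obtain l \<xi> where l: "y < \<xi>" "\<xi> < S" "DERIV u \<xi> :> l" "u S - u y = (S - y) * l"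
      using MVT[OF yS(1) cont dif] by blast
    have "S - t < \<xi>" using l yS by linarith
    then have "DERIV u \<xi> :> a \<xi>" using D l by blast
    then have "l = a \<xi>" using l(3) DERIV_unique by blast
    have "(u y - u S) / (y - S) = l"
    proof -
      have "u y - u S = (y - S) * l" using l(4) by (simp add: algebra_simps)
      moreover have "y - S \<noteq> 0" using yS by simp
      ultimately show ?thesis by simp
    qed
    moreover have "dist \<xi> S < d" using l yS by (simp add: dist_real_def)
    then have "dist (a \<xi>) (a S) < \<epsilon>" using d by blast
    ultimately show "\<bar>(u y - u S) / (y - S) - a S\<bar> < \<epsilon>" using \<open>l = a \<xi>\<close> by (simp add: dist_real_def)
  qed (use d t in auto)
qed

end

context visc begin

lemma per_nat_u: assumes pu: "\<forall>x. u (x+1) = u x" shows "u (x + real n) = u x"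
proof (induction n)
  case (Suc n)
  have "u (x + real (Suc n)) = u ((x + real n) + 1)" by (simp add: algebra_simps)
  also have "\<dots> = u (x + real n)" using pu by blast
  finally show ?case using Suc by simp
qed simp

lemma per_nat_G: assumes pG: "\<forall>x p v. G (x+1) p v = G x p v" shows "G (x + real n) p v = G x p v"
proof (induction n)
  case (Suc n)
  have "G (x + real (Suc n)) p v = G ((x + real n) + 1) p v" by (simp add: algebra_simps)
  also have "\<dots> = G (x + real n) p v" using pG by blast
  finally show ?case using Suc by simp
qed simp

lemma per_nat_a:
  assumes pu: "\<forall>x. u (x+1) = u x" and pG: "\<forall>x p v. G (x+1) p v = G x p v"
  shows "a (x + real n) = a x"
proof -
  have "Zs (x + real n) = Zs x" unfolding Zs_def using per_nat_u[OF pu] per_nat_G[OF pG] by simp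
  then show ?thesis by (simp add: a_def)
qed

lemma global:
  assumes ab: "\<forall>z. a z < b z" and pu: "\<forall>x. u (x+1) = u x" and pG: "\<forall>x p v. G (x+1) p v = G x p v"
  shows "(\<forall>z. (u has_real_derivative a z) (at z)) \<or> (\<forall>z. (u has_real_derivative b z) (at z))"
proof (cases "\<exists>z0. RD z0 (a z0)")
  case True
  then obtain z0 where z0: "RD z0 (a z0)" by blast
  have all: "\<forall>y. y > z0 \<longrightarrow> (u has_real_derivative a y) (at y)"
  proof (rule ccontr)
    assume nt: "\<not> (\<forall>y. y > z0 \<longrightarrow> (u has_real_derivative a y) (at y))"
    define N where "N = {y. y > z0 \<and> \<not> (u has_real_derivative a y) (at y)}"
    have Nne: "N \<noteq> {}" using nt by (auto simp: N_def)
    obtain t0 where t0: "t0 > 0" "\<forall>w. z0 < w \<and> w < z0 + t0 \<longrightarrow> (u has_real_derivative a w) (at w)"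
      using prop_right[OF ab z0] by blast
    have Nlow: "\<forall>y\<in>N. z0 + t0 \<le> y"
    proof
      fix y assume "y \<in> N"
      then show "z0 + t0 \<le> y" using t0 by (auto simp: N_def not_le[symmetric])
    qed
    have bdd: "bdd_below N" using Nlow by (auto intro: bdd_belowI)
    define S where "S = Inf N"
    have S1: "z0 + t0 \<le> S" unfolding S_def using Nne Nlow by (intro cInf_greatest) auto
    have below: "\<forall>y. z0 < y \<and> y < S \<longrightarrow> (u has_real_derivative a y) (at y)"
    proof (intro allI impI)
      fix y assume y: "z0 < y \<and> y < S"
      show "(u has_real_derivative a y) (at y)"
      proof (rule ccontr)
        assume "\<not> ?thesis"
        then have "y \<in> N" using y by (auto simp: N_def)
        then have "S \<le> y" unfolding S_def using bdd by (rule cInf_lower)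
        then show False using y by simp
      qed
    qed
    have LS: "LD S (a S)"
      by (rule left_limit[of S "S - z0"]) (use ab S1 t0 below in auto)
    have RS: "RD S (a S)"
    proof -
      have "\<not> RD S (b S)" using noconvexkink[OF ab[rule_format] LS] by blast
      then show ?thesis using DR by blast
    qed
    have DS: "(u has_real_derivative a S) (at S)" by (rule RL_deriv[OF RS LS])
    obtain t1 where t1: "t1 > 0" "\<forall>w. S < w \<and> w < S + t1 \<longrightarrow> (u has_real_derivative a w) (at w)"
      using prop_right[OF ab RS] by blast
    have "\<forall>y\<in>N. S + t1 \<le> y"
    proof
      fix y assume yN: "y \<in> N"
      have "S \<le> y" unfolding S_def using cInf_lower[OF yN bdd] .
      moreover have "y \<noteq> S" using yN DS by (auto simp: N_def)
      moreover have "\<not> (S < y \<and> y < S + t1)" using yN t1 by (auto simp: N_def)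
      ultimately show "S + t1 \<le> y" by linarith
    qed
    then have "S + t1 \<le> S" unfolding S_def using Nne by (intro cInf_greatest) (auto simp: S_def)
    then show False using t1 by simp
  qed
  have "\<forall>z. (u has_real_derivative a z) (at z)"
  proof
    fix z
    define n where "n = nat \<lceil>z0 - z\<rceil> + 1"
    have "real n \<ge> z0 - z + 1" unfolding n_def by linarith
    then have "z + real n > z0" by linarith
    then have "(u has_real_derivative a (z + real n)) (at (z + real n))" using all by blast
    then have "(u has_real_derivative a z) (at (z + real n))" using per_nat_a[OF pu pG] by simp
    then have "((\<lambda>x. u (x + real n)) has_real_derivative a z) (at z)" by (simp add: DERIV_shift)
    moreover have "(\<lambda>x. u (x + real n)) = u" using per_nat_u[OF pu] by auto
    ultimately show "(u has_real_derivative a z) (at z)" by simp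
  qed
  then show ?thesis by blast
next
  case False
  have "\<forall>z. (u has_real_derivative b z) (at z)"
  proof
    fix z
    have R: "RD z (b z)" using DR False by blast
    have "\<not> LD z (a z)" using noconvexkink[OF ab[rule_format] _ R] by blast
    then have "LD z (b z)" using DL by blast
    then show "(u has_real_derivative b z) (at z)" by (rule RL_deriv[OF R])
  qed
  then show ?thesis by blast
qed

end

lemma smooth_extract:
  assumes "smooth_fun (\<lambda>(x::real, p::real, u::real). H x p u)"
  shows "continuous_on UNIV (\<lambda>(x::real, p::real, u::real). H x p u)"
    and "\<exists>F'. (\<forall>z. ((\<lambda>(x::real, p::real, u::real). H x p u) has_derivative F' z) (at z))
        \<and> (\<forall>v. \<forall>z. (\<lambda>z. F' z v) differentiable (at z))"
proof -
  have C0: "Ck 0 (\<lambda>(x::real, p::real, u::real). H x p u)" and C2: "Ck 2 (\<lambda>(x::real, p::real, u::real). H x p u)"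
    using assms unfolding smooth_fun_def by blast+
  from C0 show "continuous_on UNIV (\<lambda>(x::real, p::real, u::real). H x p u)" by simp
  from C2 obtain F' where F': "\<forall>z. ((\<lambda>(x::real, p::real, u::real). H x p u) has_derivative F' z) (at z)"
    and C1: "\<forall>v. Ck 1 (\<lambda>z. F' z v)"
    by (auto simp: numeral_2_eq_2)
  have "\<forall>v. \<forall>z. (\<lambda>z. F' z v) differentiable (at z)"
  proof (intro allI)
    fix v z
    from C1 have "Ck 1 (\<lambda>z. F' z v)" by blast
    then obtain G' where "\<forall>z. ((\<lambda>z. F' z v) has_derivative G' z) (at z)"
      unfolding One_nat_def Ck.simps(2) by blast
    then have "((\<lambda>z. F' z v) has_derivative G' z) (at z)" by blast
    then show "(\<lambda>z. F' z v) differentiable (at z)" unfolding differentiable_def by blast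
  qed
  with F' show "\<exists>F'. (\<forall>z. ((\<lambda>(x::real, p::real, u::real). H x p u) has_derivative F' z) (at z))
        \<and> (\<forall>v. \<forall>z. (\<lambda>z. F' z v) differentiable (at z))" by blast
qed

lemma partial_p:
  fixes K :: "real \<times> real \<times> real \<Rightarrow> real"
  assumes "(K has_derivative L) (at (x,p,u))"
  shows "((\<lambda>q. K (x,q,u)) has_real_derivative L (0,1,0)) (at p)"
proof -
  have i: "((\<lambda>q::real. (x,q,u)) has_derivative (\<lambda>h. (0,h,0))) (at p)"
    by (auto intro!: derivative_eq_intros)
  have "((K \<circ> (\<lambda>q::real. (x,q,u))) has_derivative (L \<circ> (\<lambda>h. (0,h,0)))) (at p)"
    using diff_chain_at[OF i assms] by simp
  moreover have lin: "linear L" using assms by (rule has_derivative_linear)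
  have "(L \<circ> (\<lambda>h. (0,h,0))) = (\<lambda>h. L (0,1,0) * h)"
  proof
    fix h :: real
    have "(0::real, h, 0::real) = h *\<^sub>R (0,1,0)" by simp
    then have "L (0,h,0) = h *\<^sub>R L (0,1,0)" using linear_scale[OF lin] by metis
    then show "(L \<circ> (\<lambda>h. (0,h,0))) h = L (0,1,0) * h" by simp
  qed
  ultimately have "((\<lambda>q. K (x,q,u)) has_derivative (\<lambda>h. L (0,1,0) * h)) (at p)" by (simp add: o_def)
  then show ?thesis by (simp add: has_field_derivative_def)
qed

lemma partial_u:
  fixes K :: "real \<times> real \<times> real \<Rightarrow> real"
  assumes "(K has_derivative L) (at (x,p,u))"
  shows "((\<lambda>v. K (x,p,v)) has_real_derivative L (0,0,1)) (at u)"
proof -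
  have i: "((\<lambda>v::real. (x,p,v)) has_derivative (\<lambda>h. (0,0,h))) (at u)"
    by (auto intro!: derivative_eq_intros)
  have "((K \<circ> (\<lambda>v::real. (x,p,v))) has_derivative (L \<circ> (\<lambda>h. (0,0,h)))) (at u)"
    using diff_chain_at[OF i assms] by simp
  moreover have lin: "linear L" using assms by (rule has_derivative_linear)
  have "(L \<circ> (\<lambda>h. (0,0,h))) = (\<lambda>h. L (0,0,1) * h)"
  proof
    fix h :: real
    have "(0::real, 0::real, h) = h *\<^sub>R (0,0,1)" by simp
    then have "L (0,0,h) = h *\<^sub>R L (0,0,1)" using linear_scale[OF lin] by metis
    then show "(L \<circ> (\<lambda>h. (0,0,h))) h = L (0,0,1) * h" by simp
  qed
  ultimately have "((\<lambda>v. K (x,p,v)) has_derivative (\<lambda>h. L (0,0,1) * h)) (at u)" by (simp add: o_def)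
  then show ?thesis by (simp add: has_field_derivative_def)
qed

lemma sconv_of_deriv:
  fixes f f' :: "real \<Rightarrow> real"
  assumes D: "\<And>q. (f has_real_derivative f' q) (at q)" and M: "\<And>p q. p < q \<Longrightarrow> f' p < f' q"
  shows "sconv f"
proof -
  have main: "f ((1-t)*p + t*q) < (1-t) * f p + t * f q" if pq: "p < q" "0 < t" "t < 1" for p q t
  proof -
    define m where "m = (1-t)*p + t*q"
    have mp0: "m - p = t*(q - p)" unfolding m_def by (simp add: algebra_simps)
    have mp1: "q - m = (1-t)*(q-p)" unfolding m_def by (simp add: algebra_simps)
    have pos1: "t*(q - p) > 0" using pq by simp
    have pos2: "(1-t)*(q-p) > 0" using pq by simp
    have m1: "p < m" using mp0 pos1 by linarith
    have m2: "m < q" using mp1 pos2 by linarith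
    note m = m1 m2
    have cont: "continuous_on {x..y} f" for x y
      using D by (meson DERIV_isCont continuous_at_imp_continuous_on)
    have dif: "f differentiable (at x)" for x
      using D real_differentiable_def by blast
    obtain l1 \<xi>1 where l1: "p < \<xi>1" "\<xi>1 < m" "DERIV f \<xi>1 :> l1" "f m - f p = (m - p) * l1"
      using MVT[OF m(1) cont dif] by blast
    obtain l2 \<xi>2 where l2: "m < \<xi>2" "\<xi>2 < q" "DERIV f \<xi>2 :> l2" "f q - f m = (q - m) * l2"
      using MVT[OF m(2) cont dif] by blast
    have "l1 = f' \<xi>1" using l1(3) D DERIV_unique by blast
    have "l2 = f' \<xi>2" using l2(3) D DERIV_unique by blast
    have lt: "l1 < l2" using M[of \<xi>1 \<xi>2] l1 l2 \<open>l1 = _\<close> \<open>l2 = _\<close> by simp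
    note mp = mp0 mp1
    have "(1-t) * f p + t * f q - f m = - (1-t)*(f m - f p) + t * (f q - f m)" by (simp add: algebra_simps)
    also have "\<dots> = - (1-t)*(t*(q-p)*l1) + t*((1-t)*(q-p)*l2)"
    proof -
      have A1: "f m - f p = t*(q-p)*l1" using l1(4) mp0 by simp
      have A2: "f q - f m = (1-t)*(q-p)*l2" using l2(4) mp1 by simp
      show ?thesis by (simp only: A1 A2)
    qed
    also have "\<dots> = t*(1-t)*(q-p)*(l2 - l1)" by (simp add: algebra_simps)
    also have "\<dots> > 0" using pq lt by (intro mult_pos_pos) auto
    finally show ?thesis by (simp add: m_def)
  qed
  show ?thesis unfolding sconv_def
  proof (intro allI impI)
    fix p q t :: real assume "p \<noteq> q" "0 < t" "t < 1"
    then consider "p < q" | "q < p" by linarith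
    then show "f ((1-t)*p + t*q) < (1-t) * f p + t * f q"
    proof cases
      case 1 then show ?thesis using main \<open>0 < t\<close> \<open>t < 1\<close> by blast
    next
      case 2
      have "f ((1-(1-t))*q + (1-t)*p) < (1-(1-t)) * f q + (1-t) * f p"
        using main[OF 2, of "1-t"] \<open>0 < t\<close> \<open>t < 1\<close> by simp
      then show ?thesis by (simp add: algebra_simps)
    qed
  qed
qed

lemma dir_deriv:
  fixes K :: "real \<times> real \<times> real \<Rightarrow> real"
  assumes "(K has_derivative L) (at (x, p + s*\<alpha>, v + s*\<beta>))"
  shows "((\<lambda>\<theta>. K (x, p + \<theta>*\<alpha>, v + \<theta>*\<beta>)) has_real_derivative (\<alpha> * L (0,1,0) + \<beta> * L (0,0,1))) (at s)"
proof -
  have i: "((\<lambda>\<theta>::real. (x, p + \<theta>*\<alpha>, v + \<theta>*\<beta>)) has_derivative (\<lambda>h. (0, h*\<alpha>, h*\<beta>))) (at s)"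
    by (auto intro!: derivative_eq_intros)
  have "((K \<circ> (\<lambda>\<theta>::real. (x, p + \<theta>*\<alpha>, v + \<theta>*\<beta>))) has_derivative (L \<circ> (\<lambda>h. (0, h*\<alpha>, h*\<beta>)))) (at s)"
    using diff_chain_at[OF i assms] by simp
  moreover have lin: "linear L" using assms by (rule has_derivative_linear)
  have "(L \<circ> (\<lambda>h. (0, h*\<alpha>, h*\<beta>))) = (\<lambda>h. (\<alpha> * L (0,1,0) + \<beta> * L (0,0,1)) * h)"
  proof
    fix h :: real
    have "(0::real, h*\<alpha>, h*\<beta>) = (h*\<alpha>) *\<^sub>R (0,1,0) + (h*\<beta>) *\<^sub>R (0,0,1)" by simp
    then have "L (0, h*\<alpha>, h*\<beta>) = (h*\<alpha>) *\<^sub>R L (0,1,0) + (h*\<beta>) *\<^sub>R L (0,0,1)"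
      using linear_scale[OF lin] linear_add[OF lin] by metis
    then show "(L \<circ> (\<lambda>h. (0, h*\<alpha>, h*\<beta>))) h = (\<alpha> * L (0,1,0) + \<beta> * L (0,0,1)) * h"
      by (simp add: algebra_simps)
  qed
  ultimately have "((\<lambda>\<theta>. K (x, p + \<theta>*\<alpha>, v + \<theta>*\<beta>)) has_derivative (\<lambda>h. (\<alpha> * L (0,1,0) + \<beta> * L (0,0,1)) * h)) (at s)"
    by (simp add: o_def)
  then show ?thesis by (simp add: has_field_derivative_def)
qed

lemma est_core:
  fixes F' :: "real \<times> real \<times> real \<Rightarrow> real \<times> real \<times> real \<Rightarrow> real"
    and H :: "real \<Rightarrow> real \<Rightarrow> real \<Rightarrow> real"
  assumes F': "\<forall>z. ((\<lambda>(x,p,u). H x p u) has_derivative F' z) (at z)"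
  and H0: "H x P V = 0"
  and Bid: "F' (x,P,V) (0,1,0) * R1 + F' (x,P,V) (0,0,1) * R = \<mu> * R"
  and uc: "\<forall>\<theta>. 0 \<le> \<theta> \<and> \<theta> \<le> 1 \<longrightarrow> \<bar>F' (x, P + \<theta>*(-d*R1), V + \<theta>*(-d*R)) (0,1,0) - F' (x,P,V) (0,1,0)\<bar> \<le> \<delta>
        \<and> \<bar>F' (x, P + \<theta>*(-d*R1), V + \<theta>*(-d*R)) (0,0,1) - F' (x,P,V) (0,0,1)\<bar> \<le> \<delta>"
  and tol: "(\<bar>R1\<bar> + \<bar>R\<bar>) * \<delta> \<le> K"
  shows "\<exists>e. d * \<Theta> * R + H x (P - d*R1) (V - d*R) = d * (R*(\<Theta> - \<mu>) - e) \<and> \<bar>e\<bar> \<le> K"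
proof -
  define \<phi> where "\<phi> \<theta> = H x (P + \<theta>*(-d*R1)) (V + \<theta>*(-d*R))" for \<theta>
  define Fp where "Fp z = F' z (0,1,0)" for z
  define Fu where "Fu z = F' z (0,0,1)" for z
  have der: "(\<phi> has_real_derivative ((-d*R1) * Fp (x, P + s*(-d*R1), V + s*(-d*R)) + (-d*R) * Fu (x, P + s*(-d*R1), V + s*(-d*R)))) (at s)" for s
  proof -
    have "((\<lambda>(x,p,u). H x p u) has_derivative F' (x, P + s*(-d*R1), V + s*(-d*R))) (at (x, P + s*(-d*R1), V + s*(-d*R)))"
      using F' by blast
    from dir_deriv[OF this] show ?thesis unfolding \<phi>_def Fp_def Fu_def by simp
  qed
  have cont: "continuous_on {0..1} \<phi>"
    using der by (meson DERIV_isCont continuous_at_imp_continuous_on)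
  have dif: "\<phi> differentiable (at s)" for s using der real_differentiable_def by blast
  have "\<exists>l z. 0 < z \<and> z < 1 \<and> DERIV \<phi> z :> l \<and> \<phi> 1 - \<phi> 0 = (1 - 0) * l"
    by (rule MVT) (use cont dif in auto)
  then obtain l s where ls: "0 < s" "s < 1" "DERIV \<phi> s :> l" "\<phi> 1 - \<phi> 0 = (1 - 0) * l"
    by blast
  define pt where "pt = (x, P + s*(-d*R1), V + s*(-d*R))"
  have l: "l = (-d*R1) * Fp pt + (-d*R) * Fu pt" unfolding pt_def by (rule DERIV_unique[OF ls(3) der[of s]])
  have \<phi>0: "\<phi> 0 = 0" using H0 by (simp add: \<phi>_def)
  have \<phi>1: "\<phi> 1 = H x (P - d*R1) (V - d*R)" by (simp add: \<phi>_def)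
  define e where "e = R1 * (Fp pt - Fp (x,P,V)) + R * (Fu pt - Fu (x,P,V))"
  have s01: "0 \<le> s \<and> s \<le> 1" using ls by auto
  have dd: "\<bar>Fp pt - Fp (x,P,V)\<bar> \<le> \<delta> \<and> \<bar>Fu pt - Fu (x,P,V)\<bar> \<le> \<delta>"
    using uc[rule_format, OF s01] unfolding pt_def Fp_def Fu_def .
  have e1: "\<bar>R1 * (Fp pt - Fp (x,P,V))\<bar> \<le> \<bar>R1\<bar> * \<delta>"
    unfolding abs_mult using dd by (intro mult_left_mono) auto
  have e2: "\<bar>R * (Fu pt - Fu (x,P,V))\<bar> \<le> \<bar>R\<bar> * \<delta>"
    unfolding abs_mult using dd by (intro mult_left_mono) auto
  have "\<bar>e\<bar> \<le> \<bar>R1\<bar> * \<delta> + \<bar>R\<bar> * \<delta>" unfolding e_def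
    using abs_triangle_ineq[of "R1 * (Fp pt - Fp (x,P,V))" "R * (Fu pt - Fu (x,P,V))"] e1 e2 by linarith
  then have eK: "\<bar>e\<bar> \<le> K" using tol by (simp add: algebra_simps)
  have "H x (P - d*R1) (V - d*R) = l" using \<phi>1 \<phi>0 ls(4) by simp
  also have "\<dots> = - d * (R1 * Fp pt + R * Fu pt)" using l by (simp add: algebra_simps)
  also have "R1 * Fp pt + R * Fu pt = \<mu> * R + e"
    using Bid unfolding e_def Fp_def Fu_def by (simp add: algebra_simps)
  finally have "H x (P - d*R1) (V - d*R) = - d * (\<mu> * R + e)" .
  then have "d * \<Theta> * R + H x (P - d*R1) (V - d*R) = d * (R*(\<Theta> - \<mu>) - e)" by (simp add: algebra_simps)
  then show ?thesis using eK by blast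
qed

lemma main_reg:
  fixes H :: "real \<Rightarrow> real \<Rightarrow> real \<Rightarrow> real" and u0 :: "real \<Rightarrow> real"
  assumes H_smooth: "smooth_fun (\<lambda>(x::real, p::real, u::real). H x p u)"
    and H_periodic: "\<forall>x p u. H (x + 1) p u = H x p u"
    and H_convex: "\<forall>x p u. Hpp H x p u > 0"
    and H_superlinear: "\<forall>x u M. \<exists>C. \<forall>p. H x p u \<ge> M * \<bar>p\<bar> - C"
    and u0_visc: "viscosity_solution H u0"
    and u0_nondeg: "\<forall>x. u0 differentiable (at x) \<longrightarrow> Hp H x (deriv u0 x) (u0 x) \<noteq> 0"
  shows "\<exists>F' c. (\<forall>z. ((\<lambda>(x,p,u). H x p u) has_derivative F' z) (at z))
     \<and> (\<forall>v. continuous_on UNIV (\<lambda>z. F' z v))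
     \<and> (\<forall>x p u. Hp H x p u = F' (x,p,u) (0,1,0)) \<and> (\<forall>x p u. Hu H x p u = F' (x,p,u) (0,0,1))
     \<and> (\<forall>z. (u0 has_real_derivative c z) (at z)) \<and> continuous_on UNIV c
     \<and> (\<forall>z. H z (c z) (u0 z) = 0) \<and> (\<forall>z. Hp H z (c z) (u0 z) \<noteq> 0)"
proof -
  have contH: "continuous_on UNIV (\<lambda>(x::real, p::real, u::real). H x p u)"
    using smooth_extract(1)[OF H_smooth] .
  obtain F' where F': "\<forall>z. ((\<lambda>(x::real, p::real, u::real). H x p u) has_derivative F' z) (at z)"
    and F'd: "\<forall>v z. (\<lambda>z. F' z v) differentiable (at z)"
    using smooth_extract(2)[OF H_smooth] by blast
  have F'c: "continuous_on UNIV (\<lambda>z. F' z v)" for v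
    using F'd by (meson continuous_at_imp_continuous_on differentiable_imp_continuous_within)
  have Hp_der: "((\<lambda>q. H x q u) has_real_derivative F' (x,p,u) (0,1,0)) (at p)" for x p u
  proof -
    have "((\<lambda>q. (\<lambda>(x::real, p::real, u::real). H x p u) (x,q,u)) has_real_derivative F' (x,p,u) (0,1,0)) (at p)"
      by (rule partial_p) (use F' in blast)
    then show ?thesis by simp
  qed
  have Hp_eq: "Hp H x p u = F' (x,p,u) (0,1,0)" for x p u
    unfolding Hp_def using Hp_der by (rule DERIV_imp_deriv)
  have Hu_eq: "Hu H x p u = F' (x,p,u) (0,0,1)" for x p u
  proof -
    have "((\<lambda>v. (\<lambda>(x::real, p::real, u::real). H x p u) (x,p,v)) has_real_derivative F' (x,p,u) (0,0,1)) (at u)"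
      by (rule partial_u) (use F' in blast)
    then have "((\<lambda>v. H x p v) has_real_derivative F' (x,p,u) (0,0,1)) (at u)" by simp
    then show ?thesis unfolding Hu_def by (rule DERIV_imp_deriv)
  qed
  have Hpp_der: "((\<lambda>q. Hp H x q u) has_real_derivative Hpp H x p u) (at p)" for x p u
  proof -
    obtain L where L: "((\<lambda>z. F' z (0,1,0)) has_derivative L) (at (x,p,u))"
      using F'd unfolding differentiable_def by blast
    have "((\<lambda>q. (\<lambda>z. F' z (0,1,0)) (x,q,u)) has_real_derivative L (0,1,0)) (at p)"
      by (rule partial_p[OF L])
    then have D: "((\<lambda>q. Hp H x q u) has_real_derivative L (0,1,0)) (at p)" by (simp add: Hp_eq)
    then have "Hpp H x p u = L (0,1,0)" unfolding Hpp_def by (rule DERIV_imp_deriv)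
    then show ?thesis using D by simp
  qed
  have sc: "sconv (\<lambda>p. H x p v)" for x v
  proof (rule sconv_of_deriv)
    show "((\<lambda>p. H x p v) has_real_derivative Hp H x q v) (at q)" for q
      using Hp_der Hp_eq by simp
    show "Hp H x p v < Hp H x q v" if "p < q" for p q
      using DERIV_pos_imp_increasing[OF that] Hpp_der H_convex by blast
  qed
  have visc_def: "continuous_on UNIV u0" "periodic1 u0"
    "\<And>\<phi> x. \<phi> C1_differentiable_on UNIV \<Longrightarrow> local_max_at (\<lambda>y. u0 y - \<phi> y) x \<Longrightarrow> H x (deriv \<phi> x) (u0 x) \<le> 0"
    "\<And>\<phi> x. \<phi> C1_differentiable_on UNIV \<Longrightarrow> local_min_at (\<lambda>y. u0 y - \<phi> y) x \<Longrightarrow> H x (deriv \<phi> x) (u0 x) \<ge> 0"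
    using u0_visc unfolding viscosity_solution_def by blast+
  interpret V: visc H u0
  proof
    show "continuous_on UNIV (\<lambda>(x, p, v). H x p v)" using contH .
    show "sconv (\<lambda>p. H x p v)" for x v by (rule sc)
    show "\<exists>C. \<forall>p. \<bar>p\<bar> - C \<le> H x p v" for x v
      using H_superlinear[rule_format, of 1 x v] by auto
  qed (use visc_def in auto)
  have ab: "\<forall>z. V.a z < V.b z"
  proof
    fix z
    show "V.a z < V.b z"
    proof (rule ccontr)
      assume "\<not> V.a z < V.b z"
      then have eq: "V.a z = V.b z" using V.a_le_b[of z] by simp
      have R: "V.RD z (V.a z)" using V.DR[of z] eq by auto
      have L: "V.LD z (V.a z)" using V.DL[of z] eq by auto
      have D: "(u0 has_real_derivative V.a z) (at z)" by (rule V.RL_deriv[OF R L])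
      then have "u0 differentiable (at z)" using real_differentiable_def by blast
      moreover have "deriv u0 z = V.a z" using D by (rule DERIV_imp_deriv)
      ultimately have nz: "Hp H z (V.a z) (u0 z) \<noteq> 0" using u0_nondeg by auto
      have mn: "\<forall>y. \<bar>V.a z - y\<bar> < 1 \<longrightarrow> H z (V.a z) (u0 z) \<le> H z y (u0 z)"
      proof (intro allI impI)
        fix y
        have h1: "H z (V.a z) (u0 z) \<le> 0" using V.a_in by (simp add: V.Zs_def)
        show "H z (V.a z) (u0 z) \<le> H z y (u0 z)"
        proof (cases "y = V.a z")
          case False
          then have "H z y (u0 z) > 0" using V.Zpos[of y z] eq by force
          then show ?thesis using h1 by simp
        qed simp
      qed
      have "Hp H z (V.a z) (u0 z) = 0"
        using DERIV_local_min[OF Hp_der[of z "u0 z" "V.a z", folded Hp_eq] _ mn] by simp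
      then show False using nz by simp
    qed
  qed
  have per_u: "\<forall>x. u0 (x+1) = u0 x" using visc_def(2) by (simp add: periodic1_def)
  obtain c where cder: "\<forall>z. (u0 has_real_derivative c z) (at z)" and ccont: "\<forall>z. isCont c z"
  proof -
    from V.global[OF ab per_u H_periodic]
    show ?thesis
    proof
      assume "\<forall>z. (u0 has_real_derivative V.a z) (at z)"
      moreover have "\<forall>z. isCont V.a z" using V.cont_a ab by blast
      ultimately show ?thesis using that by blast
    next
      assume "\<forall>z. (u0 has_real_derivative V.b z) (at z)"
      moreover have "\<forall>z. isCont V.b z" using V.cont_b ab by blast
      ultimately show ?thesis using that by blast
    qed
  qed
  have du: "deriv u0 z = c z" for z using cder DERIV_imp_deriv by blast
  have ccon: "continuous_on UNIV c" using ccont by (simp add: continuous_at_imp_continuous_on)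
  have C1u: "u0 C1_differentiable_on UNIV"
    unfolding C1_differentiable_on_def
    using cder ccon by (auto simp: has_real_derivative_iff_has_vector_derivative[symmetric] intro!: exI[of _ c])
  have H0: "H z (c z) (u0 z) = 0" for z
  proof -
    have "local_max_at (\<lambda>y. u0 y - u0 y) z" "local_min_at (\<lambda>y. u0 y - u0 y) z"
      unfolding local_max_at_def local_min_at_def by (auto intro: exI[of _ 1])
    then have "H z (deriv u0 z) (u0 z) \<le> 0" "H z (deriv u0 z) (u0 z) \<ge> 0"
      using visc_def(3,4)[OF C1u] by blast+
    then show ?thesis using du by simp
  qed
  have Bnz: "Hp H z (c z) (u0 z) \<noteq> 0" for z
    using u0_nondeg du cder real_differentiable_def by metis
  show ?thesis
    apply (rule exI[of _ F'], rule exI[of _ c])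
    using F' F'c Hp_eq Hu_eq cder ccon H0 Bnz by blast
qed

lemma bound01:
  fixes f :: "real \<Rightarrow> real"
  assumes "continuous_on UNIV f"
  shows "\<exists>M\<ge>0. \<forall>x\<in>{0..1}. \<bar>f x\<bar> \<le> M"
proof -
  have cf: "continuous_on {0..1} (\<lambda>x. \<bar>f x\<bar>)"
    by (intro continuous_intros continuous_on_subset[OF assms]) auto
  have ne: "{0..1::real} \<noteq> {}" by simp
  from continuous_attains_sup[OF compact_Icc[of "0::real" 1] ne cf] obtain x0 where
    "x0 \<in> {0..1}" "\<forall>y\<in>{0..1}. \<bar>f y\<bar> \<le> \<bar>f x0\<bar>" by blast
  then show ?thesis by (intro exI[of _ "\<bar>f x0\<bar>"] conjI) simp_all
qed

lemma min01:
  fixes f :: "real \<Rightarrow> real"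
  assumes "continuous_on UNIV f" "\<forall>x. f x > 0"
  shows "\<exists>m>0. \<forall>x\<in>{0..1}. m \<le> f x"
proof -
  have ne: "{0..1::real} \<noteq> {}" by simp
  from continuous_attains_inf[OF compact_Icc[of "0::real" 1] ne continuous_on_subset[OF assms(1)]] obtain x0 where
    "x0 \<in> {0..1::real}" "\<forall>y\<in>{0..1}. f x0 \<le> f y" by blast
  then show ?thesis using assms(2) by (intro exI[of _ "f x0"] conjI) simp_all
qed

lemma dist3:
  fixes x p v p' v' :: real
  shows "dist (x, p, v) (x, p', v') \<le> \<bar>p - p'\<bar> + \<bar>v - v'\<bar>"
proof -
  have "dist (x, p, v) (x, p', v') = sqrt ((dist x x)\<^sup>2 + (dist (p,v) (p',v'))\<^sup>2)"
    by (simp add: dist_Pair_Pair)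
  also have "\<dots> = dist (p,v) (p',v')" by simp
  also have "\<dots> = sqrt ((dist p p')\<^sup>2 + (dist v v')\<^sup>2)" by (simp add: dist_Pair_Pair)
  also have "\<dots> \<le> \<bar>dist p p'\<bar> + \<bar>dist v v'\<bar>" by (rule sqrt_sum_squares_le_sum_abs)
  finally show ?thesis by (simp add: dist_real_def)
qed

lemma dbound:
  fixes \<epsilon>0 \<epsilon> \<Theta> t :: real
  assumes "\<epsilon>0 > 0" "\<epsilon> \<noteq> 0" "\<Theta> < 0" "t \<le> (ln \<epsilon>0 - ln \<bar>\<epsilon>\<bar>) / (- \<Theta>)"
  shows "\<bar>\<epsilon> * exp (- \<Theta> * t)\<bar> \<le> \<epsilon>0"
proof -
  have nt: "- \<Theta> > 0" using assms(3) by simp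
  have "t * (- \<Theta>) \<le> ln \<epsilon>0 - ln \<bar>\<epsilon>\<bar>" using assms(4) pos_le_divide_eq[OF nt] by blast
  then have "exp (- \<Theta> * t) \<le> exp (ln \<epsilon>0 - ln \<bar>\<epsilon>\<bar>)" by (simp add: mult.commute)
  also have "\<dots> = \<epsilon>0 / \<bar>\<epsilon>\<bar>" using assms(1,2) by (simp add: exp_diff)
  finally have "\<bar>\<epsilon>\<bar> * exp (- \<Theta> * t) \<le> \<bar>\<epsilon>\<bar> * (\<epsilon>0 / \<bar>\<epsilon>\<bar>)"
    by (intro mult_left_mono) auto
  then show ?thesis using assms(2) by (simp add: abs_mult)
qed

theorem lemma2p4:
  fixes H :: "real \<Rightarrow> real \<Rightarrow> real \<Rightarrow> real" and u0 :: "real \<Rightarrow> real"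
    and \<kappa> \<Theta> :: real
  assumes H_smooth: "smooth_fun (\<lambda>(x::real, p::real, u::real). H x p u)"
    and H_periodic: "\<forall>x p u. H (x + 1) p u = H x p u"
    and H_convex: "\<forall>x p u. Hpp H x p u > 0"
    and H_superlinear: "\<forall>x u M. \<exists>C. \<forall>p. H x p u \<ge> M * \<bar>p\<bar> - C"
    and kappa_pos: "\<kappa> > 0"
    and H_u_bound: "\<forall>x p u. \<bar>Hu H x p u\<bar> \<le> \<kappa>"
    and u0_visc: "viscosity_solution H u0"
    and u0_nondeg: "\<forall>x. u0 differentiable (at x) \<longrightarrow> Hp H x (deriv u0 x) (u0 x) \<noteq> 0"
    and mu_neg: "mu_const H u0 < 0"
    and Theta: "mu_const H u0 < \<Theta>" "\<Theta> < 0"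
  shows "\<exists>\<epsilon>0>0.
     (\<forall>\<epsilon>\<in>{0<..\<epsilon>0}. \<forall>x\<in>{0..1}. \<forall>t\<in>{0..(ln \<epsilon>0 - ln \<bar>\<epsilon>\<bar>) / (- \<Theta>)}.
        deriv (\<lambda>s. w_eps H u0 \<Theta> \<epsilon> x s) t
          + H x (deriv (\<lambda>y. w_eps H u0 \<Theta> \<epsilon> y t) x) (w_eps H u0 \<Theta> \<epsilon> x t) \<ge> 0) \<and>
     (\<forall>\<epsilon>\<in>{-\<epsilon>0..<0}. \<forall>x\<in>{0..1}. \<forall>t\<in>{0..(ln \<epsilon>0 - ln \<bar>\<epsilon>\<bar>) / (- \<Theta>)}.
        deriv (\<lambda>s. w_eps H u0 \<Theta> \<epsilon> x s) t
          + H x (deriv (\<lambda>y. w_eps H u0 \<Theta> \<epsilon> y t) x) (w_eps H u0 \<Theta> \<epsilon> x t) \<le> 0)"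
proof -
  obtain F' c where F': "\<forall>z. ((\<lambda>(x,p,u). H x p u) has_derivative F' z) (at z)"
    and F'c: "\<forall>v. continuous_on UNIV (\<lambda>z. F' z v)"
    and Hp_eq: "\<forall>x p u. Hp H x p u = F' (x,p,u) (0,1,0)" and Hu_eq: "\<forall>x p u. Hu H x p u = F' (x,p,u) (0,0,1)"
    and cder: "\<forall>z. (u0 has_real_derivative c z) (at z)" and ccon: "continuous_on UNIV c"
    and H0: "\<forall>z. H z (c z) (u0 z) = 0" and Bnz: "\<forall>z. Hp H z (c z) (u0 z) \<noteq> 0"
    using main_reg[OF H_smooth H_periodic H_convex H_superlinear u0_visc u0_nondeg] by blast
  define \<mu> where "\<mu> = mu_const H u0"
  define B where "B z = Hp H z (c z) (u0 z)" for z
  define Hu0 where "Hu0 z = Hu H z (c z) (u0 z)" for z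
  define g where "g \<tau> = (\<mu> - Hu0 \<tau>) / B \<tau>" for \<tau>
  have du: "deriv u0 = c" using cder DERIV_imp_deriv by blast
  have contu0: "continuous_on UNIV u0" using cder
    by (meson DERIV_isCont continuous_at_imp_continuous_on)
  have cpath: "continuous_on UNIV (\<lambda>z. (z, c z, u0 z))"
    by (intro continuous_intros ccon contu0)
  have contB: "continuous_on UNIV B"
  proof -
    have "continuous_on UNIV (\<lambda>z. F' (z, c z, u0 z) (0,1,0))"
      using continuous_on_compose2[OF F'c[rule_format, of "(0,1,0)"] cpath] by simp
    then show ?thesis unfolding B_def using Hp_eq by simp
  qed
  have contHu0: "continuous_on UNIV Hu0"
  proof -
    have "continuous_on UNIV (\<lambda>z. F' (z, c z, u0 z) (0,0,1))"
      using continuous_on_compose2[OF F'c[rule_format, of "(0,0,1)"] cpath] by simp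
    then show ?thesis unfolding Hu0_def using Hu_eq by simp
  qed
  have Bnz': "B z \<noteq> 0" for z using Bnz by (simp add: B_def)
  have contg: "continuous_on UNIV g" unfolding g_def
    by (intro continuous_intros contB contHu0) (use Bnz' in auto)
  have rho_eq: "rho H u0 = (\<lambda>x. exp (LBINT \<tau>=0..x. g \<tau>))"
    by (rule ext) (simp add: rho_def Bfun_def du g_def B_def Hu0_def \<mu>_def)
  have Ider: "((\<lambda>x. LBINT \<tau>=0..x. g \<tau>) has_real_derivative g x) (at x)" for x
  proof -
    define lo where "lo = min (x - 1) (-1)"
    define hi where "hi = max (x + 1) 1"
    have "((\<lambda>x. interval_lebesgue_integral lborel (ereal 0) (ereal x) g) has_vector_derivative g x) (at x within {lo..hi})"
      by (rule interval_integral_FTC2) (auto simp: lo_def hi_def intro: continuous_on_subset[OF contg])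
    then have "((\<lambda>x. LBINT \<tau>=0..x. g \<tau>) has_vector_derivative g x) (at x within {lo..hi})"
      by (simp add: zero_ereal_def)
    moreover have "x \<in> interior {lo..hi}" by (auto simp: lo_def hi_def)
    then have "at x within {lo..hi} = at x" by (rule at_within_interior)
    ultimately have "((\<lambda>x. LBINT \<tau>=0..x. g \<tau>) has_vector_derivative g x) (at x)" by simp
    then show ?thesis unfolding has_real_derivative_iff_has_vector_derivative .
  qed
  define R where "R = rho H u0"
  define R1 where "R1 x = R x * g x" for x
  have Rder: "(R has_real_derivative R1 x) (at x)" for x
  proof -
    have "((\<lambda>x. exp (LBINT \<tau>=0..x. g \<tau>)) has_real_derivative exp (LBINT \<tau>=0..x. g \<tau>) * g x) (at x)"
      using Ider[of x] by (auto intro!: derivative_eq_intros)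
    then show ?thesis by (simp add: R_def R1_def rho_eq)
  qed
  have Rpos: "R x > 0" for x by (simp add: R_def rho_eq)
  have contR: "continuous_on UNIV R" using Rder by (meson DERIV_isCont continuous_at_imp_continuous_on)
  have contR1: "continuous_on UNIV R1" unfolding R1_def by (intro continuous_intros contR contg)
  have key: "B x * R1 x + Hu0 x * R x = \<mu> * R x" for x
  proof -
    have bg: "B x * g x = \<mu> - Hu0 x" using Bnz'[of x] by (simp add: g_def)
    have "B x * R1 x = R x * (B x * g x)" unfolding R1_def by (simp only: ac_simps)
    also have "\<dots> = R x * (\<mu> - Hu0 x)" using bg by simp
    finally show ?thesis by (simp add: algebra_simps)
  qed
  obtain MR where MR: "MR \<ge> 0" "\<forall>x\<in>{0..1}. \<bar>R x\<bar> \<le> MR" using bound01[OF contR] by blast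
  obtain MR1 where MR1: "MR1 \<ge> 0" "\<forall>x\<in>{0..1}. \<bar>R1 x\<bar> \<le> MR1" using bound01[OF contR1] by blast
  obtain MP where MP: "MP \<ge> 0" "\<forall>x\<in>{0..1}. \<bar>c x\<bar> \<le> MP" using bound01[OF ccon] by blast
  obtain MV where MV: "MV \<ge> 0" "\<forall>x\<in>{0..1}. \<bar>u0 x\<bar> \<le> MV" using bound01[OF contu0] by blast
  obtain Rmin where Rmin: "Rmin > 0" "\<forall>x\<in>{0..1}. Rmin \<le> R x" using min01[OF contR] Rpos by blast
  define Cst where "Cst = MR1 + MR + 1"
  have Cst: "Cst > 0" "MR1 \<le> Cst" "MR \<le> Cst" "MR1 + MR \<le> Cst" using MR MR1 by (auto simp: Cst_def)
  have th0: "\<Theta> - \<mu> > 0" using Theta by (simp add: \<mu>_def)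
  define \<delta>1 where "\<delta>1 = Rmin * (\<Theta> - \<mu>) / Cst"
  have \<delta>1: "\<delta>1 > 0" using Rmin th0 Cst by (simp add: \<delta>1_def)
  have C\<delta>: "Cst * \<delta>1 = Rmin * (\<Theta> - \<mu>)" using Cst by (simp add: \<delta>1_def)
  define S where "S = {0..1::real} \<times> ({-(MP+Cst)..MP+Cst} \<times> {-(MV+Cst)..MV+Cst})"
  have cS: "compact S" unfolding S_def by (intro compact_Times compact_Icc)
  have ucF: "uniformly_continuous_on S (\<lambda>z. F' z v)" for v
    using compact_uniformly_continuous[OF continuous_on_subset[OF F'c[rule_format] subset_UNIV] cS] .
  have "\<exists>d>0. \<forall>a\<in>S. \<forall>b\<in>S. dist b a < d \<longrightarrow> dist (F' b (0,1,0)) (F' a (0,1,0)) < \<delta>1"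
    using ucF[of "(0,1,0)"] \<delta>1 unfolding uniformly_continuous_on_def by blast
  then obtain \<eta>1 where \<eta>1: "\<eta>1 > 0" "\<forall>a\<in>S. \<forall>b\<in>S. dist b a < \<eta>1 \<longrightarrow> dist (F' b (0,1,0)) (F' a (0,1,0)) < \<delta>1"
    by blast
  have "\<exists>d>0. \<forall>a\<in>S. \<forall>b\<in>S. dist b a < d \<longrightarrow> dist (F' b (0,0,1)) (F' a (0,0,1)) < \<delta>1"
    using ucF[of "(0,0,1)"] \<delta>1 unfolding uniformly_continuous_on_def by blast
  then obtain \<eta>2 where \<eta>2: "\<eta>2 > 0" "\<forall>a\<in>S. \<forall>b\<in>S. dist b a < \<eta>2 \<longrightarrow> dist (F' b (0,0,1)) (F' a (0,0,1)) < \<delta>1"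
    by blast
  define \<epsilon>0 where "\<epsilon>0 = min 1 (min \<eta>1 \<eta>2 / (2 * Cst))"
  have e0: "\<epsilon>0 > 0" "\<epsilon>0 \<le> 1" using \<eta>1 \<eta>2 Cst by (auto simp: \<epsilon>0_def)
  have e0C: "\<epsilon>0 * Cst < \<eta>1" "\<epsilon>0 * Cst < \<eta>2"
  proof -
    have "\<epsilon>0 * Cst \<le> (min \<eta>1 \<eta>2 / (2 * Cst)) * Cst" unfolding \<epsilon>0_def using Cst
      by (intro mult_right_mono) auto
    also have "\<dots> = min \<eta>1 \<eta>2 / 2" using Cst by simp
    finally have "\<epsilon>0 * Cst \<le> min \<eta>1 \<eta>2 / 2" .
    then show "\<epsilon>0 * Cst < \<eta>1" "\<epsilon>0 * Cst < \<eta>2" using \<eta>1 \<eta>2 by linarith+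
  qed
  have core: "\<exists>e. d * \<Theta> * R x + H x (c x - d*R1 x) (u0 x - d*R x) = d * (R x*(\<Theta> - \<mu>) - e) \<and> \<bar>e\<bar> \<le> R x * (\<Theta> - \<mu>)"
    if x: "x \<in> {0..1}" and d: "\<bar>d\<bar> \<le> \<epsilon>0" for x d
  proof (rule est_core[OF F'])
    show "H x (c x) (u0 x) = 0" using H0 by blast
    show "F' (x, c x, u0 x) (0,1,0) * R1 x + F' (x, c x, u0 x) (0,0,1) * R x = \<mu> * R x"
      using key[of x] Hp_eq Hu_eq by (simp add: B_def Hu0_def)
    have "(\<bar>R1 x\<bar> + \<bar>R x\<bar>) * \<delta>1 \<le> (MR1 + MR) * \<delta>1"
      using MR MR1 x \<delta>1 by (intro mult_right_mono add_mono) auto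
    also have "\<dots> \<le> Cst * \<delta>1" using Cst \<delta>1 by (intro mult_right_mono) auto
    also have "\<dots> \<le> R x * (\<Theta> - \<mu>)" unfolding C\<delta> using Rmin x th0 by (intro mult_right_mono) auto
    finally show "(\<bar>R1 x\<bar> + \<bar>R x\<bar>) * \<delta>1 \<le> R x * (\<Theta> - \<mu>)" .
    show "\<forall>\<theta>. 0 \<le> \<theta> \<and> \<theta> \<le> 1 \<longrightarrow>
      \<bar>F' (x, c x + \<theta>*(-d*R1 x), u0 x + \<theta>*(-d*R x)) (0,1,0) - F' (x, c x, u0 x) (0,1,0)\<bar> \<le> \<delta>1 \<and>
      \<bar>F' (x, c x + \<theta>*(-d*R1 x), u0 x + \<theta>*(-d*R x)) (0,0,1) - F' (x, c x, u0 x) (0,0,1)\<bar> \<le> \<delta>1"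
    proof (intro allI impI)
      fix \<theta> :: real assume \<theta>: "0 \<le> \<theta> \<and> \<theta> \<le> 1"
      define q where "q = (x, c x + \<theta>*(-d*R1 x), u0 x + \<theta>*(-d*R x))"
      define q0 where "q0 = (x, c x, u0 x)"
      have a1: "\<bar>\<theta>*(-d*R1 x)\<bar> \<le> \<epsilon>0 * MR1"
      proof -
        have "\<bar>\<theta>*(-d*R1 x)\<bar> = \<theta> * (\<bar>d\<bar> * \<bar>R1 x\<bar>)" using \<theta> by (simp add: abs_mult)
        also have "\<dots> \<le> 1 * (\<epsilon>0 * MR1)" using \<theta> d MR1 x by (intro mult_mono) auto
        finally show ?thesis by simp
      qed
      have a2: "\<bar>\<theta>*(-d*R x)\<bar> \<le> \<epsilon>0 * MR"
      proof -
        have "\<bar>\<theta>*(-d*R x)\<bar> = \<theta> * (\<bar>d\<bar> * \<bar>R x\<bar>)" using \<theta> by (simp add: abs_mult)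
        also have "\<dots> \<le> 1 * (\<epsilon>0 * MR)" using \<theta> d MR x by (intro mult_mono) auto
        finally show ?thesis by simp
      qed
      have "\<epsilon>0 * MR1 \<le> 1 * MR1" using e0 MR1 by (intro mult_right_mono) auto
      then have b1: "\<epsilon>0 * MR1 \<le> Cst" using Cst by linarith
      have "\<epsilon>0 * MR \<le> 1 * MR" using e0 MR by (intro mult_right_mono) auto
      then have b2: "\<epsilon>0 * MR \<le> Cst" using Cst by linarith
      have cx: "\<bar>c x\<bar> \<le> MP" using MP x by blast
      have ux: "\<bar>u0 x\<bar> \<le> MV" using MV x by blast
      have q0S: "q0 \<in> S" unfolding q0_def S_def using x cx ux Cst by (auto simp: abs_le_iff)
      have qS: "q \<in> S" unfolding q_def S_def using x cx ux a1 a2 b1 b2 by (auto simp: abs_le_iff)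
      have "dist q q0 \<le> \<bar>(c x + \<theta>*(-d*R1 x)) - c x\<bar> + \<bar>(u0 x + \<theta>*(-d*R x)) - u0 x\<bar>"
        unfolding q_def q0_def by (rule dist3)
      also have "\<dots> = \<bar>\<theta>*(-d*R1 x)\<bar> + \<bar>\<theta>*(-d*R x)\<bar>" by simp
      finally have "dist q q0 \<le> \<bar>\<theta>*(-d*R1 x)\<bar> + \<bar>\<theta>*(-d*R x)\<bar>" .
      also have "\<dots> \<le> \<epsilon>0 * (MR1 + MR)" using a1 a2 by (simp add: algebra_simps)
      also have "\<dots> \<le> \<epsilon>0 * Cst" using e0 Cst by (intro mult_left_mono) auto
      finally have dq: "dist q q0 \<le> \<epsilon>0 * Cst" .
      have dq1: "dist q q0 < \<eta>1" using dq e0C by linarith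
      have dq2: "dist q q0 < \<eta>2" using dq e0C by linarith
      have "dist (F' q (0,1,0)) (F' q0 (0,1,0)) < \<delta>1" using \<eta>1(2) q0S qS dq1 by blast
      moreover have "dist (F' q (0,0,1)) (F' q0 (0,0,1)) < \<delta>1" using \<eta>2(2) q0S qS dq2 by blast
      ultimately show "\<bar>F' (x, c x + \<theta>*(-d*R1 x), u0 x + \<theta>*(-d*R x)) (0,1,0) - F' (x, c x, u0 x) (0,1,0)\<bar> \<le> \<delta>1 \<and>
        \<bar>F' (x, c x + \<theta>*(-d*R1 x), u0 x + \<theta>*(-d*R x)) (0,0,1) - F' (x, c x, u0 x) (0,0,1)\<bar> \<le> \<delta>1"
        unfolding q_def q0_def dist_real_def by simp
    qed
  qed
  have dt: "deriv (\<lambda>s. w_eps H u0 \<Theta> \<epsilon> x s) t = (\<epsilon> * exp (- \<Theta> * t)) * \<Theta> * R x" for \<epsilon> x t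
  proof -
    have "((\<lambda>s. u0 x - \<epsilon> * R x * exp (- \<Theta> * s)) has_real_derivative (\<epsilon> * exp (- \<Theta> * t)) * \<Theta> * R x) (at t)"
      by (auto intro!: derivative_eq_intros simp: algebra_simps)
    then show ?thesis unfolding w_eps_def R_def by (rule DERIV_imp_deriv)
  qed
  have dx: "deriv (\<lambda>y. w_eps H u0 \<Theta> \<epsilon> y t) x = c x - (\<epsilon> * exp (- \<Theta> * t)) * R1 x" for \<epsilon> x t
  proof -
    have "((\<lambda>y. \<epsilon> * R y * exp (- \<Theta> * t)) has_real_derivative \<epsilon> * R1 x * exp (- \<Theta> * t)) (at x)"
      using DERIV_cmult_right[OF DERIV_cmult[OF Rder[of x], of \<epsilon>], of "exp (- \<Theta> * t)"] .
    from DERIV_diff[OF cder[rule_format, of x] this]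
    have "((\<lambda>y. u0 y - \<epsilon> * R y * exp (- \<Theta> * t)) has_real_derivative c x - \<epsilon> * R1 x * exp (- \<Theta> * t)) (at x)" .
    then have "deriv (\<lambda>y. u0 y - \<epsilon> * R y * exp (- \<Theta> * t)) x = c x - \<epsilon> * R1 x * exp (- \<Theta> * t)"
      by (rule DERIV_imp_deriv)
    then show ?thesis unfolding w_eps_def R_def by (simp add: algebra_simps)
  qed
  have wv: "w_eps H u0 \<Theta> \<epsilon> x t = u0 x - (\<epsilon> * exp (- \<Theta> * t)) * R x" for \<epsilon> x t
    unfolding w_eps_def R_def by (simp add: algebra_simps)
  have expr: "deriv (\<lambda>s. w_eps H u0 \<Theta> \<epsilon> x s) t
          + H x (deriv (\<lambda>y. w_eps H u0 \<Theta> \<epsilon> y t) x) (w_eps H u0 \<Theta> \<epsilon> x t)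
        = (\<epsilon> * exp (- \<Theta> * t)) * \<Theta> * R x + H x (c x - (\<epsilon> * exp (- \<Theta> * t)) * R1 x) (u0 x - (\<epsilon> * exp (- \<Theta> * t)) * R x)"
    for \<epsilon> x t by (subst dt, subst dx, subst wv) (rule refl)
  show ?thesis
  proof (intro exI[of _ \<epsilon>0] conjI ballI)
    show "\<epsilon>0 > 0" using e0 by simp
  next
    fix \<epsilon> x t :: real assume \<epsilon>: "\<epsilon> \<in> {0<..\<epsilon>0}" and x: "x \<in> {0..1}" and t: "t \<in> {0..(ln \<epsilon>0 - ln \<bar>\<epsilon>\<bar>) / (- \<Theta>)}"
    define d where "d = \<epsilon> * exp (- \<Theta> * t)"
    have dle: "\<bar>d\<bar> \<le> \<epsilon>0" unfolding d_def using dbound[of \<epsilon>0 \<epsilon> \<Theta> t] e0 \<epsilon> t Theta by auto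
    have dpos: "d > 0" using \<epsilon> by (simp add: d_def)
    obtain e where e: "d * \<Theta> * R x + H x (c x - d*R1 x) (u0 x - d*R x) = d * (R x*(\<Theta> - \<mu>) - e)"
      "\<bar>e\<bar> \<le> R x * (\<Theta> - \<mu>)" using core[OF x dle] by blast
    have "d * (R x*(\<Theta> - \<mu>) - e) \<ge> 0" using dpos e(2) by (intro mult_nonneg_nonneg) auto
    then show "deriv (\<lambda>s. w_eps H u0 \<Theta> \<epsilon> x s) t
          + H x (deriv (\<lambda>y. w_eps H u0 \<Theta> \<epsilon> y t) x) (w_eps H u0 \<Theta> \<epsilon> x t) \<ge> 0"
      unfolding expr d_def[symmetric] e(1) .
  next
    fix \<epsilon> x t :: real assume \<epsilon>: "\<epsilon> \<in> {-\<epsilon>0..<0}" and x: "x \<in> {0..1}" and t: "t \<in> {0..(ln \<epsilon>0 - ln \<bar>\<epsilon>\<bar>) / (- \<Theta>)}"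
    define d where "d = \<epsilon> * exp (- \<Theta> * t)"
    have dle: "\<bar>d\<bar> \<le> \<epsilon>0" unfolding d_def using dbound[of \<epsilon>0 \<epsilon> \<Theta> t] e0 \<epsilon> t Theta by auto
    have dneg: "d < 0" using \<epsilon> by (simp add: d_def mult_neg_pos)
    obtain e where e: "d * \<Theta> * R x + H x (c x - d*R1 x) (u0 x - d*R x) = d * (R x*(\<Theta> - \<mu>) - e)"
      "\<bar>e\<bar> \<le> R x * (\<Theta> - \<mu>)" using core[OF x dle] by blast
    have "d * (R x*(\<Theta> - \<mu>) - e) \<le> 0" using dneg e(2) by (intro mult_nonpos_nonneg) auto
    then show "deriv (\<lambda>s. w_eps H u0 \<Theta> \<epsilon> x s) t
          + H x (deriv (\<lambda>y. w_eps H u0 \<Theta> \<epsilon> y t) x) (w_eps H u0 \<Theta> \<epsilon> x t) \<le> 0"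
      unfolding expr d_def[symmetric] e(1) .
  qed
qed

end
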